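(* Let $H$ be a bipartite graph with $m$ edges and width $w$. Then for every graph $G$, $$t_H(G) \geq t_{K_2}(G)^{m+w}.$$
   Context: All graphs are finite and simple. A homomorphism from $H$ to $G$ is a map $f:V(H)\to V(G)$ sending edges to edges; $h_H(G)$ is the number of homomorphisms and $t_H(G)=h_H(G)/|V(G)|^{|V(H)|}$. $K_2$ is a single edge. Width: for a connected bipartite graph $H$ with parts $V_1,V_2$, let $\bar H$ be the bipartite graph with parts $V_1,V_2$ in which $(v_1,v_2)\in V_1\times V_2$ is an edge if and only if it is not an edge of $H$; the width of $H$ is the minimum degree of $\bar H$. If $H$ is not connected, its width is the sum of the widths of its connected components. *)

theory Defs
  imports Complex_Main "HOL-Library.FuncSet"
begin

definition graph :: "'a set \<Rightarrow> 'a set set \<Rightarrow> bool" where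
  "graph V E \<longleftrightarrow> finite V \<and> (\<forall>e\<in>E. \<exists>u\<in>V. \<exists>v\<in>V. u \<noteq> v \<and> e = {u, v})"

definition hom_count :: "'a set \<Rightarrow> 'a set set \<Rightarrow> 'b set \<Rightarrow> 'b set set \<Rightarrow> nat" where
  "hom_count VH EH VG EG =
     card {f \<in> VH \<rightarrow>\<^sub>E VG. \<forall>u v. {u, v} \<in> EH \<longrightarrow> {f u, f v} \<in> EG}"

definition hom_density :: "'a set \<Rightarrow> 'a set set \<Rightarrow> 'b set \<Rightarrow> 'b set set \<Rightarrow> real" where
  "hom_density VH EH VG EG = real (hom_count VH EH VG EG) / real (card VG) ^ card VH"

definition K2_V :: "nat set" where "K2_V = {0, 1}"
definition K2_E :: "nat set set" where "K2_E = {{0, 1}}"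

definition bipartition :: "'a set \<Rightarrow> 'a set set \<Rightarrow> 'a set \<Rightarrow> 'a set \<Rightarrow> bool" where
  "bipartition V E V1 V2 \<longleftrightarrow> V1 \<inter> V2 = {} \<and> V1 \<union> V2 = V \<and>
     (\<forall>e\<in>E. \<exists>a\<in>V1. \<exists>b\<in>V2. e = {a, b})"

definition bipartite :: "'a set \<Rightarrow> 'a set set \<Rightarrow> bool" where
  "bipartite V E \<longleftrightarrow> (\<exists>V1 V2. bipartition V E V1 V2)"

text \<open>Width of a connected bipartite graph: minimum degree of the bipartite complement
  with respect to its bipartition (unique up to swapping the parts, which does not matter).\<close>
definition conn_width :: "'a set \<Rightarrow> 'a set set \<Rightarrow> nat" where
  "conn_width V E =
     (let p = (SOME p. bipartition V E (fst p) (snd p)); V1 = fst p; V2 = snd p in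
      Min ((\<lambda>v. card {u \<in> V2. {v, u} \<notin> E}) ` V1 \<union> (\<lambda>v. card {u \<in> V1. {v, u} \<notin> E}) ` V2))"

definition adj :: "'a set set \<Rightarrow> 'a \<Rightarrow> 'a \<Rightarrow> bool" where
  "adj E u v \<longleftrightarrow> {u, v} \<in> E"

definition components :: "'a set \<Rightarrow> 'a set set \<Rightarrow> 'a set set" where
  "components V E = {{u \<in> V. (adj E)\<^sup>*\<^sup>* v u} | v. v \<in> V}"

definition width :: "'a set \<Rightarrow> 'a set set \<Rightarrow> nat" where
  "width V E = (\<Sum>C\<in>components V E. conn_width C {e \<in> E. e \<subseteq> C})"

end

theory Submission
  imports Defs
begin

lemma sum_PiE_Un:
  assumes "finite A" "finite B" "A \<inter> B = {}"
  shows "(\<Sum>f\<in>PiE (A\<union>B) (\<lambda>_. X). G f) =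
         (\<Sum>g\<in>PiE A (\<lambda>_. X). \<Sum>h\<in>PiE B (\<lambda>_. X). G (\<lambda>i. if i\<in>A then g i else h i))"
proof -
  have "(\<Sum>f\<in>PiE (A\<union>B) (\<lambda>_. X). G f) =
        (\<Sum>(g,h)\<in>PiE A (\<lambda>_. X) \<times> PiE B (\<lambda>_. X). G (\<lambda>i. if i\<in>A then g i else h i))"
  proof (rule sum.reindex_bij_witness[of _ "\<lambda>(g,h) i. if i\<in>A then g i else h i"
          "\<lambda>f. (restrict f A, restrict f B)"])
    fix f assume f: "f \<in> PiE (A\<union>B) (\<lambda>_. X)"
    have e: "(\<lambda>i. if i\<in>A then restrict f A i else restrict f B i) = f"
      using f by (auto simp: PiE_def extensional_def fun_eq_iff)
    show "(case (restrict f A, restrict f B) of (g, h) \<Rightarrow> \<lambda>i. if i \<in> A then g i else h i) = f"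
      using e by simp
    show "(case (restrict f A, restrict f B) of (g, h) \<Rightarrow> G (\<lambda>i. if i \<in> A then g i else h i)) = G f"
      using e by simp
    show "(restrict f A, restrict f B) \<in> PiE A (\<lambda>_. X) \<times> PiE B (\<lambda>_. X)"
      using f by auto
  next
    fix p assume p: "p \<in> PiE A (\<lambda>_. X) \<times> PiE B (\<lambda>_. X)"
    then show "(\<lambda>f. (restrict f A, restrict f B)) (case p of (g, h) \<Rightarrow> \<lambda>i. if i \<in> A then g i else h i) = p"
      using assms by (auto simp: PiE_def extensional_def fun_eq_iff)
    show "(case p of (g, h) \<Rightarrow> \<lambda>i. if i \<in> A then g i else h i) \<in> PiE (A\<union>B) (\<lambda>_. X)"
      using p by (auto simp: PiE_def extensional_def)
  qed
  also have "\<dots> = (\<Sum>g\<in>PiE A (\<lambda>_. X). \<Sum>h\<in>PiE B (\<lambda>_. X). G (\<lambda>i. if i\<in>A then g i else h i))"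
    by (simp add: sum.cartesian_product)
  finally show ?thesis .
qed

lemma sum_PiE_marginal:
  fixes F :: "'b \<Rightarrow> real"
  assumes "finite Y" "S \<subseteq> Y" "finite X"
  shows "(\<Sum>g\<in>PiE Y (\<lambda>_. X). (\<Prod>b\<in>Y. F (g b)) * h (restrict g S)) =
         (\<Sum>z\<in>X. F z) ^ card (Y - S) * (\<Sum>y\<in>PiE S (\<lambda>_. X). (\<Prod>b\<in>S. F (y b)) * h y)"
proof -
  have fS: "finite S" using assms finite_subset by blast
  have Y: "Y = S \<union> (Y - S)" using assms by auto
  have "(\<Sum>g\<in>PiE Y (\<lambda>_. X). (\<Prod>b\<in>Y. F (g b)) * h (restrict g S)) =
     (\<Sum>g\<in>PiE (S \<union> (Y - S)) (\<lambda>_. X). (\<Prod>b\<in>S \<union> (Y - S). F (g b)) * h (restrict g S))"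
    using Y by simp
  also have "\<dots> = (\<Sum>g1\<in>PiE S (\<lambda>_. X). \<Sum>g2\<in>PiE (Y - S) (\<lambda>_. X).
      (\<Prod>b\<in>S \<union> (Y - S). F (if b\<in>S then g1 b else g2 b)) * h (restrict (\<lambda>i. if i\<in>S then g1 i else g2 i) S))"
    using assms fS by (intro sum_PiE_Un) auto
  also have "\<dots> = (\<Sum>g1\<in>PiE S (\<lambda>_. X). \<Sum>g2\<in>PiE (Y - S) (\<lambda>_. X).
      ((\<Prod>b\<in>S. F (g1 b)) * h g1) * (\<Prod>b\<in>Y - S. F (g2 b)))"
  proof (intro sum.cong refl)
    fix g1 g2 assume g1: "g1 \<in> PiE S (\<lambda>_. X)" and g2: "g2 \<in> PiE (Y - S) (\<lambda>_. X)"
    have r: "restrict (\<lambda>i. if i\<in>S then g1 i else g2 i) S = g1"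
      using g1 by (auto simp: PiE_def extensional_def fun_eq_iff)
    have "(\<Prod>b\<in>S \<union> (Y - S). F (if b\<in>S then g1 b else g2 b)) =
          (\<Prod>b\<in>S. F (if b\<in>S then g1 b else g2 b)) * (\<Prod>b\<in>Y - S. F (if b\<in>S then g1 b else g2 b))"
      using fS assms by (intro prod.union_disjoint) auto
    also have "\<dots> = (\<Prod>b\<in>S. F (g1 b)) * (\<Prod>b\<in>Y - S. F (g2 b))"
      by (intro arg_cong2[where f="(*)"] prod.cong) auto
    finally show "(\<Prod>b\<in>S \<union> (Y - S). F (if b\<in>S then g1 b else g2 b)) * h (restrict (\<lambda>i. if i\<in>S then g1 i else g2 i) S)
       = ((\<Prod>b\<in>S. F (g1 b)) * h g1) * (\<Prod>b\<in>Y - S. F (g2 b))" using r by simp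
  qed
  also have "\<dots> = (\<Sum>g1\<in>PiE S (\<lambda>_. X). ((\<Prod>b\<in>S. F (g1 b)) * h g1) * (\<Sum>g2\<in>PiE (Y - S) (\<lambda>_. X). \<Prod>b\<in>Y - S. F (g2 b)))"
    by (simp add: sum_distrib_left)
  also have "(\<Sum>g2\<in>PiE (Y - S) (\<lambda>_. X). \<Prod>b\<in>Y - S. F (g2 b)) = (\<Prod>b\<in>Y - S. \<Sum>z\<in>X. F z)"
    using assms by (subst prod_sum_PiE) auto
  also have "\<dots> = (\<Sum>z\<in>X. F z) ^ card (Y - S)" by simp
  also have "(\<Sum>g1\<in>PiE S (\<lambda>_. X). ((\<Prod>b\<in>S. F (g1 b)) * h g1) * (\<Sum>z\<in>X. F z) ^ card (Y - S))
     = (\<Sum>z\<in>X. F z) ^ card (Y - S) * (\<Sum>y\<in>PiE S (\<lambda>_. X). (\<Prod>b\<in>S. F (y b)) * h y)"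
    by (simp add: sum_distrib_left mult.commute)
  finally show ?thesis .
qed

lemma jensen_exp:
  fixes q t :: "'i \<Rightarrow> real"
  assumes "finite I" "\<And>i. i\<in>I \<Longrightarrow> q i \<ge> 0" "sum q I = 1"
  shows "exp (\<Sum>i\<in>I. q i * t i) \<le> (\<Sum>i\<in>I. q i * exp (t i))"
proof -
  define s where "s = (\<Sum>i\<in>I. q i * t i)"
  have "\<And>i. exp s * (1 + (t i - s)) \<le> exp (t i)"
  proof -
    fix i
    have "exp s * (1 + (t i - s)) \<le> exp s * exp (t i - s)"
      by (intro mult_left_mono exp_ge_add_one_self) auto
    also have "\<dots> = exp (t i)" by (simp add: exp_diff)
    finally show "exp s * (1 + (t i - s)) \<le> exp (t i)" .
  qed
  hence "(\<Sum>i\<in>I. q i * (exp s * (1 + (t i - s)))) \<le> (\<Sum>i\<in>I. q i * exp (t i))"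
    using assms by (intro sum_mono mult_left_mono) auto
  moreover have "(\<Sum>i\<in>I. q i * (exp s * (1 + (t i - s)))) = (\<Sum>i\<in>I. exp s * (1 - s) * q i + exp s * (q i * t i))"
    by (intro sum.cong) (auto simp: algebra_simps)
  moreover have "(\<Sum>i\<in>I. exp s * (1 - s) * q i + exp s * (q i * t i)) = exp s * (1 - s) * sum q I + exp s * s"
    by (simp add: sum.distrib sum_distrib_left s_def)
  ultimately have "exp s * (1 - s) * sum q I + exp s * s \<le> (\<Sum>i\<in>I. q i * exp (t i))" by simp
  thus ?thesis unfolding s_def[symmetric] using assms(3) by (simp add: algebra_simps)
qed


lemma ln_ge_1_minus_inv: "0 < (t::real) \<Longrightarrow> 1 - 1 / t \<le> ln t"
proof -
  assume t: "0 < t"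
  have "ln (1/t) \<le> 1/t - 1" using t by (intro ln_le_minus_one) auto
  thus ?thesis using t by (simp add: ln_div)
qed

locale gr =
  fixes VG :: "'b set" and EG :: "'b set set"
  assumes gG: "graph VG EG" and VGne: "VG \<noteq> {}" and EGne: "EG \<noteq> {}"
begin

definition W :: "'b \<Rightarrow> 'b \<Rightarrow> real" where "W x y = (if {x,y} \<in> EG then 1 else 0)"
definition dg :: "'b \<Rightarrow> real" where "dg x = (\<Sum>y\<in>VG. W x y)"
definition DD :: real where "DD = (\<Sum>x\<in>VG. dg x)"
definition pi :: "'b \<Rightarrow> real" where "pi x = dg x / DD"
definition nn :: real where "nn = real (card VG)"
definition cc :: "'a set \<Rightarrow> ('a \<Rightarrow> 'b) \<Rightarrow> real" where
  "cc S y = (\<Sum>z\<in>VG. \<Prod>b\<in>S. W z (y b))"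

lemma finV: "finite VG" using gG by (simp add: graph_def)
lemma nn_pos: "nn > 0" using finV VGne by (simp add: nn_def card_gt_0_iff)
lemma W_sym: "W x y = W y x" by (simp add: W_def insert_commute)
lemma W_01: "W x y = 0 \<or> W x y = 1" by (simp add: W_def)
lemma W_nonneg: "W x y \<ge> 0" by (simp add: W_def)
lemma W_VG: "W x y \<noteq> 0 \<Longrightarrow> x \<in> VG \<and> y \<in> VG"
proof -
  assume "W x y \<noteq> 0"
  hence "{x,y} \<in> EG" by (simp add: W_def split: if_splits)
  then obtain u v where "u \<in> VG" "v \<in> VG" "{x,y} = {u,v}" using gG unfolding graph_def by blast
  thus ?thesis by (metis insertCI insert_iff singletonD)
qed
lemma dg_nonneg: "dg x \<ge> 0" by (simp add: dg_def sum_nonneg W_nonneg)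
lemma dg_zero: "dg x = 0 \<Longrightarrow> W x y = 0"
proof -
  assume d: "dg x = 0"
  show "W x y = 0"
  proof (cases "y \<in> VG")
    case True
    with d finV show ?thesis unfolding dg_def using sum_nonneg_eq_0_iff[of VG "W x"] W_nonneg by blast
  next
    case False thus ?thesis using W_VG by blast
  qed
qed
lemma DD_pos: "DD > 0"
proof -
  obtain e where "e \<in> EG" using EGne by blast
  then obtain u v where uv: "u \<in> VG" "v \<in> VG" "u \<noteq> v" "e = {u,v}" using gG unfolding graph_def by blast
  have "W u v = 1" using uv \<open>e \<in> EG\<close> by (simp add: W_def)
  hence "1 \<le> dg u" unfolding dg_def using uv finV W_nonneg
    by (metis member_le_sum)
  also have "dg u \<le> DD" unfolding DD_def using uv finV dg_nonneg by (metis member_le_sum)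
  finally show ?thesis by simp
qed
lemma pi_nonneg: "pi x \<ge> 0" using DD_pos dg_nonneg by (simp add: pi_def)
lemma sum_pi: "(\<Sum>x\<in>VG. pi x) = 1"
  using DD_pos by (simp add: pi_def DD_def sum_divide_distrib[symmetric])
lemma pi_pos_iff: "pi x > 0 \<longleftrightarrow> dg x > 0" using DD_pos by (simp add: pi_def divide_pos_pos zero_less_divide_iff)

lemma prodW_01: "(\<Prod>b\<in>S. W x (y b)) = 0 \<or> (\<Prod>b\<in>S. W x (y b)) = 1"
proof (cases "finite S")
  case True
  show ?thesis
  proof (cases "\<exists>b\<in>S. W x (y b) = 0")
    case True thus ?thesis using \<open>finite S\<close> by auto
  next
    case False
    hence "\<forall>b\<in>S. W x (y b) = 1" using W_01 by blast
    thus ?thesis by simp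
  qed
qed simp

lemma prodW_nonneg: "(\<Prod>b\<in>S. W x (y b)) \<ge> 0" by (simp add: prod_nonneg W_nonneg)

lemma prodW_1: "(\<Prod>b\<in>S. W x (y b)) \<noteq> 0 \<Longrightarrow> finite S \<Longrightarrow> b \<in> S \<Longrightarrow> W x (y b) = 1"
  using W_01 by (metis prod_zero_iff)

lemma sum_prodW: "finite S \<Longrightarrow> (\<Sum>y\<in>PiE S (\<lambda>_. VG). \<Prod>b\<in>S. W x (y b)) = dg x ^ card S"
  using finV by (subst prod_sum_PiE[symmetric]) (auto simp: dg_def)

lemma I1: "(\<Sum>x\<in>VG. pi x * ln (dg x)) \<ge> ln DD - ln nn"
proof -
  have pw: "pi x * ln (dg x) - pi x * ln DD + pi x * ln nn \<ge> pi x - 1/nn" if "x \<in> VG" for x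
  proof (cases "dg x > 0")
    case True
    hence pp: "pi x > 0" using pi_pos_iff by simp
    have "1 - 1 / (pi x * nn) \<le> ln (pi x * nn)" using pp nn_pos by (intro ln_ge_1_minus_inv) auto
    hence "pi x * (1 - 1 / (pi x * nn)) \<le> pi x * ln (pi x * nn)" using pp by (intro mult_left_mono) auto
    moreover have "pi x * (1 - 1 / (pi x * nn)) = pi x - 1/nn" using pp nn_pos by (simp add: field_simps)
    moreover have l: "ln (pi x * nn) = ln (dg x) - ln DD + ln nn"
      using True DD_pos nn_pos by (simp add: pi_def ln_mult ln_div)
    have "pi x * ln (pi x * nn) = pi x * (ln (dg x) - ln DD + ln nn)" by (simp only: l)
    hence "pi x * ln (pi x * nn) = pi x * ln (dg x) - pi x * ln DD + pi x * ln nn"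
      by (simp add: algebra_simps)
    ultimately show ?thesis by linarith
  next
    case False
    hence "dg x = 0" using dg_nonneg[of x] by linarith
    thus ?thesis using nn_pos by (simp add: pi_def)
  qed
  have "(\<Sum>x\<in>VG. pi x - 1/nn) \<le> (\<Sum>x\<in>VG. pi x * ln (dg x) - pi x * ln DD + pi x * ln nn)"
    by (intro sum_mono pw)
  moreover have "(\<Sum>x\<in>VG. pi x - 1/nn) = 0" using nn_pos by (simp add: sum_subtractf sum_pi nn_def)
  moreover have "(\<Sum>x\<in>VG. pi x * ln (dg x) - pi x * ln DD + pi x * ln nn) =
     (\<Sum>x\<in>VG. pi x * ln (dg x)) - ln DD + ln nn"
    by (simp add: sum.distrib sum_subtractf sum_distrib_right[symmetric] sum_pi)
  ultimately show ?thesis by linarith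
qed

end

context gr begin

lemma marg1:
  assumes fS: "finite S" and bS: "b \<in> S"
  shows "(\<Sum>y\<in>PiE S (\<lambda>_. VG). (\<Prod>b'\<in>S. W x (y b')) * h (y b)) =
         (\<Sum>z\<in>VG. W x z * h z) * dg x ^ (card S - 1)"
proof -
  define f where "f b' z = W x z * (if b' = b then h z else 1)" for b' z
  have "(\<Sum>y\<in>PiE S (\<lambda>_. VG). (\<Prod>b'\<in>S. W x (y b')) * h (y b)) =
        (\<Sum>y\<in>PiE S (\<lambda>_. VG). \<Prod>b'\<in>S. f b' (y b'))"
  proof (intro sum.cong refl)
    fix y assume "y \<in> PiE S (\<lambda>_. VG)"
    have "(\<Prod>b'\<in>S. f b' (y b')) = f b (y b) * (\<Prod>b'\<in>S - {b}. f b' (y b'))"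
      using fS bS by (simp add: prod.remove)
    also have "(\<Prod>b'\<in>S - {b}. f b' (y b')) = (\<Prod>b'\<in>S - {b}. W x (y b'))"
      by (intro prod.cong) (auto simp: f_def)
    also have "f b (y b) * (\<Prod>b'\<in>S - {b}. W x (y b')) = (\<Prod>b'\<in>S. W x (y b')) * h (y b)"
      using fS bS by (simp add: f_def prod.remove mult_ac)
    finally show "(\<Prod>b'\<in>S. W x (y b')) * h (y b) = (\<Prod>b'\<in>S. f b' (y b'))" by simp
  qed
  also have "\<dots> = (\<Prod>b'\<in>S. \<Sum>z\<in>VG. f b' z)"
    using fS finV by (subst prod_sum_PiE) auto
  also have "\<dots> = (\<Sum>z\<in>VG. f b z) * (\<Prod>b'\<in>S - {b}. \<Sum>z\<in>VG. f b' z)"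
    using fS bS by (simp add: prod.remove)
  also have "(\<Prod>b'\<in>S - {b}. \<Sum>z\<in>VG. f b' z) = (\<Prod>b'\<in>S - {b}. dg x)"
    by (intro prod.cong) (auto simp: f_def dg_def)
  also have "\<dots> = dg x ^ (card S - 1)" using fS bS by simp
  finally show ?thesis by (simp add: f_def)
qed

lemma PU:
  assumes fS: "finite S" and Sne: "S \<noteq> {}"
  shows "(\<Sum>x\<in>VG. pi x / dg x ^ card S * (\<Sum>y\<in>PiE S (\<lambda>_. VG). (\<Prod>b\<in>S. W x (y b)) * ln (cc S y)))
           \<ge> ln nn + real (card S) * ln (DD / nn^2)"
proof -
  define k where "k = card S"
  have k1: "k \<ge> 1" using fS Sne by (simp add: k_def Suc_le_eq card_gt_0_iff)
  define J where "J x y = pi x / dg x ^ k * (\<Prod>b\<in>S. W x (y b))" for x y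
  define P where "P y = (\<Sum>x\<in>VG. J x y)" for y
  define YS where "YS = PiE S (\<lambda>_. VG)"
  define L where "L = (\<Sum>x\<in>VG. pi x * ln (dg x))"
  have fYS: "finite YS" unfolding YS_def using fS finV by (simp add: finite_PiE)
  have J_nonneg: "J x y \<ge> 0" for x y
    unfolding J_def using pi_nonneg dg_nonneg prodW_nonneg by (intro mult_nonneg_nonneg divide_nonneg_nonneg) auto
  have P_nonneg: "P y \<ge> 0" for y unfolding P_def using J_nonneg by (simp add: sum_nonneg)
  have Jpos: "dg x > 0 \<and> (\<Prod>b\<in>S. W x (y b)) = 1" if "J x y > 0" for x y
  proof -
    have "dg x \<noteq> 0" using that by (auto simp: J_def pi_def)
    hence "dg x > 0" using dg_nonneg[of x] by linarith
    moreover have "(\<Prod>b\<in>S. W x (y b)) \<noteq> 0" using that by (auto simp: J_def)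
    ultimately show ?thesis using prodW_01 by blast
  qed
  have Ppos: "\<exists>x\<in>VG. J x y > 0" if "P y > 0" for y
  proof (rule ccontr)
    assume "\<not> ?thesis"
    hence "\<forall>x\<in>VG. J x y \<le> 0" by (simp add: not_less)
    hence "P y \<le> 0" unfolding P_def by (intro sum_nonpos) simp
    thus False using that by simp
  qed
  have Pzero: "J x y = 0" if "P y = 0" "x \<in> VG" for x y
  proof -
    have "\<forall>x\<in>VG. J x y = 0" using that(1) finV J_nonneg sum_nonneg_eq_0_iff[of VG "\<lambda>x. J x y"]
      unfolding P_def by simp
    thus ?thesis using that(2) by simp
  qed
  have pi_zero: "pi x = 0" if "\<not> dg x > 0" for x
    using that dg_nonneg[of x] by (simp add: pi_def)
  have sumJ: "(\<Sum>y\<in>YS. J x y) = pi x" if "x \<in> VG" for x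
  proof (cases "dg x > 0")
    case True
    have "(\<Sum>y\<in>YS. J x y) = pi x / dg x ^ k * (\<Sum>y\<in>YS. \<Prod>b\<in>S. W x (y b))"
      by (simp add: J_def sum_distrib_left)
    also have "\<dots> = pi x" using True fS by (simp add: YS_def sum_prodW k_def)
    finally show ?thesis .
  next
    case False thus ?thesis by (simp add: J_def pi_zero)
  qed
  have sumP: "(\<Sum>y\<in>YS. P y) = 1"
    unfolding P_def by (subst sum.swap) (simp add: sumJ sum_pi)
  have LHS: "(\<Sum>x\<in>VG. pi x / dg x ^ card S * (\<Sum>y\<in>PiE S (\<lambda>_. VG). (\<Prod>b\<in>S. W x (y b)) * ln (cc S y)))
       = (\<Sum>y\<in>YS. P y * ln (cc S y))"
  proof -
    have "(\<Sum>x\<in>VG. pi x / dg x ^ card S * (\<Sum>y\<in>PiE S (\<lambda>_. VG). (\<Prod>b\<in>S. W x (y b)) * ln (cc S y)))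
       = (\<Sum>x\<in>VG. \<Sum>y\<in>YS. J x y * ln (cc S y))"
      by (simp add: sum_distrib_left J_def YS_def k_def mult.assoc)
    also have "\<dots> = (\<Sum>y\<in>YS. \<Sum>x\<in>VG. J x y * ln (cc S y))" by (rule sum.swap)
    also have "\<dots> = (\<Sum>y\<in>YS. P y * ln (cc S y))" by (simp add: P_def sum_distrib_right)
    finally show ?thesis .
  qed
  have a: "P y * ln (cc S y) \<ge> - (\<Sum>x\<in>VG. J x y * ln (J x y)) + P y * ln (P y)" if "y \<in> YS" for y
  proof (cases "P y = 0")
    case True thus ?thesis using Pzero by simp
  next
    case False
    hence Pp: "P y > 0" using P_nonneg[of y] by linarith
    obtain x0 where x0: "x0 \<in> VG" "J x0 y > 0" using Ppos[OF Pp] by blast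
    have "1 = (\<Prod>b\<in>S. W x0 (y b))" using Jpos[OF x0(2)] by simp
    also have "\<dots> \<le> cc S y" unfolding cc_def using x0(1) finV prodW_nonneg
      by (metis member_le_sum)
    finally have c1: "cc S y \<ge> 1" .
    hence cp: "cc S y > 0" by simp
    have pw: "J x y * ln (J x y) - J x y * ln (P y) + J x y * ln (cc S y) \<ge> J x y - P y / cc S y * (\<Prod>b\<in>S. W x (y b))"
      for x
    proof (cases "J x y > 0")
      case True
      have pr: "(\<Prod>b\<in>S. W x (y b)) = 1" using Jpos[OF True] by simp
      define t where "t = J x y * cc S y / P y"
      have tp: "t > 0" using True cp Pp by (simp add: t_def)
      have "1 - 1 / t \<le> ln t" using tp by (rule ln_ge_1_minus_inv)
      hence "J x y * (1 - 1/t) \<le> J x y * ln t" using True by (intro mult_left_mono) auto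
      moreover have "J x y * (1 - 1/t) = J x y - P y / cc S y" using True cp Pp by (simp add: t_def field_simps)
      moreover have "ln t = ln (J x y) + ln (cc S y) - ln (P y)" using True cp Pp
        by (simp add: t_def ln_div ln_mult)
      moreover have "J x y * (ln (J x y) + ln (cc S y) - ln (P y)) =
          J x y * ln (J x y) - J x y * ln (P y) + J x y * ln (cc S y)" by (simp add: algebra_simps)
      ultimately show ?thesis using pr by simp
    next
      case False
      hence "J x y = 0" using J_nonneg[of x y] by linarith
      thus ?thesis using Pp cp prodW_nonneg[of x y S] by simp
    qed
    have "(\<Sum>x\<in>VG. J x y - P y / cc S y * (\<Prod>b\<in>S. W x (y b))) \<le>
          (\<Sum>x\<in>VG. J x y * ln (J x y) - J x y * ln (P y) + J x y * ln (cc S y))"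
      by (intro sum_mono pw)
    moreover have "(\<Sum>x\<in>VG. J x y - P y / cc S y * (\<Prod>b\<in>S. W x (y b))) = 0"
    proof -
      have "(\<Sum>x\<in>VG. P y / cc S y * (\<Prod>b\<in>S. W x (y b))) = P y / cc S y * cc S y"
        by (simp only: sum_distrib_left[symmetric] cc_def)
      also have "\<dots> = P y" using cp by simp
      finally show ?thesis by (simp add: sum_subtractf P_def)
    qed
    moreover have "(\<Sum>x\<in>VG. J x y * ln (J x y) - J x y * ln (P y) + J x y * ln (cc S y)) =
        (\<Sum>x\<in>VG. J x y * ln (J x y)) - P y * ln (P y) + P y * ln (cc S y)"
      by (simp add: sum.distrib sum_subtractf sum_distrib_right[symmetric] P_def)
    ultimately show ?thesis by linarith
  qed
  have b: "(\<Sum>y\<in>YS. P y * ln (P y)) \<ge> (\<Sum>y\<in>YS. P y * (\<Sum>b\<in>S. ln (pi (y b))))"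
  proof -
    define R where "R y = (\<Prod>b\<in>S. pi (y b))" for y
    have R_nonneg: "R y \<ge> 0" for y unfolding R_def by (simp add: prod_nonneg pi_nonneg)
    have sumR: "(\<Sum>y\<in>YS. R y) = 1"
      unfolding R_def YS_def using fS finV by (subst prod_sum_PiE[symmetric]) (auto simp: sum_pi)
    have pw: "P y * ln (P y) - P y * (\<Sum>b\<in>S. ln (pi (y b))) \<ge> P y - R y" if "y \<in> YS" for y
    proof (cases "P y = 0")
      case True thus ?thesis using R_nonneg[of y] by simp
    next
      case False
      hence Pp: "P y > 0" using P_nonneg[of y] by linarith
      obtain x0 where x0: "x0 \<in> VG" "J x0 y > 0" using Ppos[OF Pp] by blast
      have pb: "pi (y b) > 0" if "b \<in> S" for b
      proof -
        have "W x0 (y b) = 1" using Jpos[OF x0(2)] prodW_1 fS that by (metis zero_neq_one)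
        hence "W (y b) x0 = 1" by (simp add: W_sym)
        hence "1 \<le> dg (y b)" unfolding dg_def using x0(1) finV W_nonneg by (metis member_le_sum)
        thus ?thesis using pi_pos_iff by simp
      qed
      have Rp: "R y > 0" unfolding R_def using pb by (simp add: prod_pos)
      have lnR: "ln (R y) = (\<Sum>b\<in>S. ln (pi (y b)))" unfolding R_def by (rule ln_prod[OF fS]) (use pb in force)
      define t where "t = P y / R y"
      have tp: "t > 0" using Pp Rp by (simp add: t_def)
      have "1 - 1 / t \<le> ln t" using tp by (rule ln_ge_1_minus_inv)
      hence "P y * (1 - 1/t) \<le> P y * ln t" using Pp by (intro mult_left_mono) auto
      moreover have "P y * (1 - 1/t) = P y - R y" using Pp Rp by (simp add: t_def field_simps)
      moreover have "ln t = ln (P y) - ln (R y)" using Pp Rp by (simp add: t_def ln_div)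
      ultimately show ?thesis using lnR by (simp add: algebra_simps)
    qed
    have "(\<Sum>y\<in>YS. P y - R y) \<le> (\<Sum>y\<in>YS. P y * ln (P y) - P y * (\<Sum>b\<in>S. ln (pi (y b))))"
      by (intro sum_mono pw)
    moreover have "(\<Sum>y\<in>YS. P y - R y) = 0" by (simp add: sum_subtractf sumP sumR)
    ultimately show ?thesis by (simp add: sum_subtractf)
  qed
  have cgen: "(\<Sum>y\<in>YS. P y * h (y b)) = (\<Sum>z\<in>VG. pi z * h z)" if bS: "b \<in> S" for b h
  proof -
    have "(\<Sum>y\<in>YS. P y * h (y b)) = (\<Sum>x\<in>VG. \<Sum>y\<in>YS. J x y * h (y b))"
      unfolding P_def by (subst sum.swap) (simp add: sum_distrib_right)
    also have "\<dots> = (\<Sum>x\<in>VG. 1 / DD * (\<Sum>z\<in>VG. W x z * h z))"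
    proof (intro sum.cong refl)
      fix x assume "x \<in> VG"
      show "(\<Sum>y\<in>YS. J x y * h (y b)) = 1 / DD * (\<Sum>z\<in>VG. W x z * h z)"
      proof (cases "dg x > 0")
        case True
        have "(\<Sum>y\<in>YS. J x y * h (y b)) = pi x / dg x ^ k * (\<Sum>y\<in>YS. (\<Prod>b'\<in>S. W x (y b')) * h (y b))"
          by (simp add: J_def sum_distrib_left mult.assoc)
        also have "\<dots> = pi x / dg x ^ k * ((\<Sum>z\<in>VG. W x z * h z) * dg x ^ (k - 1))"
          unfolding YS_def k_def using marg1[OF fS bS] by simp
        also have "\<dots> = 1 / DD * (\<Sum>z\<in>VG. W x z * h z)"
        proof -
          have "dg x ^ k = dg x * dg x ^ (k - 1)" using k1 by (metis Suc_diff_1 less_le_trans power_Suc zero_less_one)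
          thus ?thesis using True DD_pos by (simp add: pi_def field_simps)
        qed
        finally show ?thesis .
      next
        case False
        hence "dg x = 0" using dg_nonneg[of x] by linarith
        thus ?thesis by (simp add: J_def pi_def dg_zero)
      qed
    qed
    also have "\<dots> = 1 / DD * (\<Sum>x\<in>VG. \<Sum>z\<in>VG. W x z * h z)"
      by (simp add: sum_distrib_left)
    also have "(\<Sum>x\<in>VG. \<Sum>z\<in>VG. W x z * h z) = (\<Sum>z\<in>VG. \<Sum>x\<in>VG. W x z * h z)"
      by (rule sum.swap)
    also have "\<dots> = (\<Sum>z\<in>VG. dg z * h z)"
      by (intro sum.cong refl) (simp add: dg_def sum_distrib_right W_sym)
    also have "1 / DD * (\<Sum>z\<in>VG. dg z * h z) = (\<Sum>z\<in>VG. pi z * h z)"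
      by (simp add: sum_distrib_left pi_def)
    finally show ?thesis .
  qed
  have d: "(\<Sum>y\<in>YS. J x y * ln (J x y)) = pi x * ln (pi x) - real k * pi x * ln (dg x)" if "x \<in> VG" for x
  proof (cases "dg x > 0")
    case True
    have pp: "pi x > 0" using True pi_pos_iff by simp
    have "(\<Sum>y\<in>YS. J x y * ln (J x y)) = (\<Sum>y\<in>YS. (pi x / dg x ^ k * (ln (pi x) - real k * ln (dg x))) * (\<Prod>b\<in>S. W x (y b)))"
    proof (intro sum.cong refl)
      fix y
      show "J x y * ln (J x y) = (pi x / dg x ^ k * (ln (pi x) - real k * ln (dg x))) * (\<Prod>b\<in>S. W x (y b))"
        using prodW_01[of x y S]
      proof
        assume "(\<Prod>b\<in>S. W x (y b)) = 0" thus ?thesis by (simp add: J_def)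
      next
        assume p1: "(\<Prod>b\<in>S. W x (y b)) = 1"
        have "ln (pi x / dg x ^ k) = ln (pi x) - real k * ln (dg x)" using pp True
          by (simp add: ln_div ln_realpow)
        thus ?thesis using p1 by (simp add: J_def)
      qed
    qed
    also have "\<dots> = (pi x / dg x ^ k * (ln (pi x) - real k * ln (dg x))) * dg x ^ k"
      by (simp only: sum_distrib_left[symmetric]) (simp add: YS_def sum_prodW fS k_def)
    also have "\<dots> = pi x * ln (pi x) - real k * pi x * ln (dg x)" using True by (simp add: field_simps)
    finally show ?thesis .
  next
    case False thus ?thesis by (simp add: J_def pi_zero)
  qed
  have e: "(\<Sum>x\<in>VG. pi x * ln (pi x)) = L - ln DD"
  proof -
    have "(\<Sum>x\<in>VG. pi x * ln (pi x)) = (\<Sum>x\<in>VG. pi x * ln (dg x) - pi x * ln DD)"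
    proof (intro sum.cong refl)
      fix x show "pi x * ln (pi x) = pi x * ln (dg x) - pi x * ln DD"
      proof (cases "dg x > 0")
        case True thus ?thesis using DD_pos by (simp add: pi_def ln_div algebra_simps)
      next
        case False thus ?thesis by (simp add: pi_zero)
      qed
    qed
    also have "\<dots> = L - ln DD" by (simp add: sum_subtractf L_def sum_distrib_right[symmetric] sum_pi)
    finally show ?thesis .
  qed
  have "(\<Sum>y\<in>YS. P y * ln (cc S y)) \<ge> (\<Sum>y\<in>YS. - (\<Sum>x\<in>VG. J x y * ln (J x y)) + P y * ln (P y))"
    by (intro sum_mono a)
  also have "(\<Sum>y\<in>YS. - (\<Sum>x\<in>VG. J x y * ln (J x y)) + P y * ln (P y)) =
      - (\<Sum>x\<in>VG. \<Sum>y\<in>YS. J x y * ln (J x y)) + (\<Sum>y\<in>YS. P y * ln (P y))"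
    by (simp add: sum.distrib sum_negf sum_subtractf sum.swap[of _ YS VG])
  also have "(\<Sum>x\<in>VG. \<Sum>y\<in>YS. J x y * ln (J x y)) = (\<Sum>x\<in>VG. pi x * ln (pi x) - real k * pi x * ln (dg x))"
    by (intro sum.cong refl d)
  also have "\<dots> = (L - ln DD) - real k * L"
    by (simp add: sum_subtractf e L_def sum_distrib_left mult.assoc)
  finally have s1: "(\<Sum>y\<in>YS. P y * ln (cc S y)) \<ge> - ((L - ln DD) - real k * L) + (\<Sum>y\<in>YS. P y * ln (P y))" .
  have "(\<Sum>y\<in>YS. P y * (\<Sum>b\<in>S. ln (pi (y b)))) = (\<Sum>b\<in>S. \<Sum>y\<in>YS. P y * ln (pi (y b)))"
    by (simp add: sum_distrib_left sum.swap[of _ YS S])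
  also have "\<dots> = (\<Sum>b\<in>S. L - ln DD)" by (intro sum.cong refl) (use cgen[of _ "\<lambda>z. ln (pi z)"] e in simp)
  also have "\<dots> = real k * (L - ln DD)" by (simp add: k_def)
  finally have s2: "(\<Sum>y\<in>YS. P y * ln (P y)) \<ge> real k * (L - ln DD)" using b by simp
  have L1: "L \<ge> ln DD - ln nn" using I1 by (simp add: L_def)
  have "(2 * real k - 1) * L \<ge> (2 * real k - 1) * (ln DD - ln nn)"
    using k1 L1 by (intro mult_left_mono) auto
  hence m: "(2 * real k - 1) * L \<ge> (2 * real k - 1) * (ln DD - ln nn)" .
  have lnq: "ln (DD / nn^2) = ln DD - 2 * ln nn" using DD_pos nn_pos by (simp add: ln_div ln_realpow)
  have "(\<Sum>y\<in>YS. P y * ln (cc S y)) \<ge> ln nn + real k * (ln DD - 2 * ln nn)"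
    using s1 s2 m by (simp only: algebra_simps)
  hence "(\<Sum>y\<in>YS. P y * ln (cc S y)) \<ge> ln nn + real k * ln (DD / nn^2)"
    by (simp only: lnq)
  thus ?thesis using LHS by (simp add: k_def)
qed

end

lemma jensen_exp2:
  fixes q t :: "'i \<Rightarrow> 'j \<Rightarrow> real"
  assumes "finite A" "finite B" "\<And>a b. a\<in>A \<Longrightarrow> b\<in>B \<Longrightarrow> q a b \<ge> 0" "(\<Sum>a\<in>A. \<Sum>b\<in>B. q a b) = 1"
  shows "exp (\<Sum>a\<in>A. \<Sum>b\<in>B. q a b * t a b) \<le> (\<Sum>a\<in>A. \<Sum>b\<in>B. q a b * exp (t a b))"
proof -
  have c: "(\<Sum>p\<in>A \<times> B. f (fst p) (snd p)) = (\<Sum>a\<in>A. \<Sum>b\<in>B. f a b)" for f :: "'i \<Rightarrow> 'j \<Rightarrow> real"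
    unfolding sum.cartesian_product by (simp add: case_prod_beta)
  have "exp (\<Sum>p\<in>A \<times> B. q (fst p) (snd p) * t (fst p) (snd p)) \<le> (\<Sum>p\<in>A \<times> B. q (fst p) (snd p) * exp (t (fst p) (snd p)))"
    using assms c[of q] by (intro jensen_exp) auto
  thus ?thesis using c[of "\<lambda>a b. q a b * t a b"] c[of "\<lambda>a b. q a b * exp (t a b)"] by simp
qed

context gr begin

lemma core:
  fixes r :: 'a and Y U :: "'a set" and N :: "'a \<Rightarrow> 'a set"
  assumes fY: "finite Y" and fU: "finite U" and Yne: "Y \<noteq> {}" and rY: "r \<notin> Y" and rU: "r \<notin> U"
    and YU: "Y \<inter> U = {}" and NY: "\<And>u. u\<in>U \<Longrightarrow> N u \<subseteq> Y"
  shows "(\<Sum>f\<in>PiE (insert r (Y \<union> U)) (\<lambda>_. VG). (\<Prod>y\<in>Y. W (f r) (f y)) * (\<Prod>u\<in>U. \<Prod>b\<in>N u. W (f u) (f b)))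
       \<ge> nn ^ (1 + card Y + card U) * (DD / nn^2) ^ (card Y + (\<Sum>u\<in>U. card (N u)))"
proof -
  define T where "T f = (\<Prod>y\<in>Y. W (f r) (f y)) * (\<Prod>u\<in>U. \<Prod>b\<in>N u. W (f u) (f b))" for f :: "'a \<Rightarrow> 'b"
  define YS where "YS = PiE Y (\<lambda>_. VG)"
  define m where "m = card Y"
  have m1: "m \<ge> 1" using fY Yne by (simp add: m_def Suc_le_eq card_gt_0_iff)
  have fYS: "finite YS" unfolding YS_def using fY finV by (simp add: finite_PiE)
  have fN: "finite (N u)" if "u \<in> U" for u using NY[OF that] fY finite_subset by blast
  have step1: "(\<Sum>f\<in>PiE (insert r (Y \<union> U)) (\<lambda>_. VG). T f) =
      (\<Sum>x\<in>VG. \<Sum>g\<in>YS. (\<Prod>y\<in>Y. W x (g y)) * (\<Prod>u\<in>U. cc (N u) g))"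
  proof -
    have e1: "insert r (Y \<union> U) = Y \<union> insert r U" by auto
    have "(\<Sum>f\<in>PiE (insert r (Y \<union> U)) (\<lambda>_. VG). T f) =
       (\<Sum>g\<in>YS. \<Sum>h\<in>PiE (insert r U) (\<lambda>_. VG). T (\<lambda>i. if i\<in>Y then g i else h i))"
      unfolding e1 YS_def using fY fU rY YU by (intro sum_PiE_Un) auto
    also have "\<dots> = (\<Sum>g\<in>YS. (\<Sum>x\<in>VG. \<Prod>y\<in>Y. W x (g y)) * (\<Prod>u\<in>U. cc (N u) g))"
    proof (intro sum.cong refl)
      fix g
      define F where "F i z = (if i = r then \<Prod>y\<in>Y. W z (g y) else \<Prod>b\<in>N i. W z (g b))" for i z
      have "(\<Sum>h\<in>PiE (insert r U) (\<lambda>_. VG). T (\<lambda>i. if i\<in>Y then g i else h i)) =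
            (\<Sum>h\<in>PiE (insert r U) (\<lambda>_. VG). \<Prod>i\<in>insert r U. F i (h i))"
      proof (intro sum.cong refl)
        fix h
        have "T (\<lambda>i. if i\<in>Y then g i else h i) = (\<Prod>y\<in>Y. W (h r) (g y)) * (\<Prod>u\<in>U. \<Prod>b\<in>N u. W (h u) (g b))"
          unfolding T_def using rY YU NY
          by (intro arg_cong2[where f="(*)"] prod.cong refl) auto
        also have "\<dots> = F r (h r) * (\<Prod>u\<in>U. F u (h u))"
          unfolding F_def using rU by (intro arg_cong2[where f="(*)"] prod.cong) auto
        also have "\<dots> = (\<Prod>i\<in>insert r U. F i (h i))" using fU rU by simp
        finally show "T (\<lambda>i. if i\<in>Y then g i else h i) = (\<Prod>i\<in>insert r U. F i (h i))" .
      qed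
      also have "\<dots> = (\<Prod>i\<in>insert r U. \<Sum>z\<in>VG. F i z)"
        using fU finV by (subst prod_sum_PiE) auto
      also have "\<dots> = (\<Sum>z\<in>VG. F r z) * (\<Prod>u\<in>U. \<Sum>z\<in>VG. F u z)" using fU rU by simp
      also have "\<dots> = (\<Sum>x\<in>VG. \<Prod>y\<in>Y. W x (g y)) * (\<Prod>u\<in>U. cc (N u) g)"
        unfolding F_def cc_def using rU by (intro arg_cong2[where f="(*)"] prod.cong sum.cong refl) auto
      finally show "(\<Sum>h\<in>PiE (insert r U) (\<lambda>_. VG). T (\<lambda>i. if i\<in>Y then g i else h i)) =
          (\<Sum>x\<in>VG. \<Prod>y\<in>Y. W x (g y)) * (\<Prod>u\<in>U. cc (N u) g)" .
    qed
    also have "\<dots> = (\<Sum>g\<in>YS. \<Sum>x\<in>VG. (\<Prod>y\<in>Y. W x (g y)) * (\<Prod>u\<in>U. cc (N u) g))"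
      by (simp add: sum_distrib_right)
    also have "\<dots> = (\<Sum>x\<in>VG. \<Sum>g\<in>YS. (\<Prod>y\<in>Y. W x (g y)) * (\<Prod>u\<in>U. cc (N u) g))"
      by (rule sum.swap)
    finally show ?thesis .
  qed
  define q where "q x g = pi x / dg x ^ m * (\<Prod>y\<in>Y. W x (g y))" for x g
  define A where "A x g = DD * dg x ^ (m - 1) * (\<Prod>u\<in>U. cc (N u) g)" for x g
  define t where "t x g = (if q x g > 0 then ln (A x g) else 0)" for x g
  have q_nonneg: "q x g \<ge> 0" for x g
    unfolding q_def using pi_nonneg dg_nonneg prodW_nonneg by (intro mult_nonneg_nonneg divide_nonneg_nonneg) auto
  have pi_zero: "pi x = 0" if "\<not> dg x > 0" for x
    using that dg_nonneg[of x] by (simp add: pi_def)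
  have sumq: "(\<Sum>g\<in>YS. q x g) = pi x" if "x \<in> VG" for x
  proof (cases "dg x > 0")
    case True
    have "(\<Sum>g\<in>YS. q x g) = pi x / dg x ^ m * (\<Sum>g\<in>YS. \<Prod>y\<in>Y. W x (g y))"
      by (simp add: q_def sum_distrib_left)
    also have "\<dots> = pi x" using True fY by (simp add: YS_def sum_prodW m_def)
    finally show ?thesis .
  next
    case False thus ?thesis by (simp add: q_def pi_zero)
  qed
  have sumq1: "(\<Sum>x\<in>VG. \<Sum>g\<in>YS. q x g) = 1" by (simp add: sumq sum_pi)
  have qpos: "dg x > 0 \<and> (\<forall>y\<in>Y. W x (g y) = 1)" if "q x g > 0" for x g
  proof -
    have "dg x \<noteq> 0" using that by (auto simp: q_def pi_def)
    hence "dg x > 0" using dg_nonneg[of x] by linarith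
    moreover have p0: "(\<Prod>y\<in>Y. W x (g y)) \<noteq> 0" using that by (auto simp: q_def)
    have "\<forall>y\<in>Y. W x (g y) = 1" using prodW_1[OF p0 fY] by simp
    ultimately show ?thesis by simp
  qed
  have ccpos: "cc (N u) g \<ge> 1" if "q x g > 0" "x \<in> VG" "u \<in> U" for x g u
  proof -
    have "(\<Prod>b\<in>N u. W x (g b)) = 1" using qpos[OF that(1)] NY[OF that(3)] by (auto intro!: prod.neutral)
    moreover have "(\<Prod>b\<in>N u. W x (g b)) \<le> cc (N u) g"
      unfolding cc_def using that(2) finV prodW_nonneg by (metis member_le_sum)
    ultimately show ?thesis by simp
  qed
  have Tq: "(\<Prod>y\<in>Y. W x (g y)) * (\<Prod>u\<in>U. cc (N u) g) = q x g * exp (t x g)" if "x \<in> VG" for x g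
  proof (cases "q x g > 0")
    case True
    have dp: "dg x > 0" and w1: "\<forall>y\<in>Y. W x (g y) = 1" using qpos[OF True] by auto
    have pr: "(\<Prod>y\<in>Y. W x (g y)) = 1" using w1 by simp
    have Ap: "A x g > 0" unfolding A_def using dp DD_pos ccpos[OF True that]
      by (intro mult_pos_pos prod_pos zero_less_power) (auto intro: less_le_trans[OF zero_less_one])
    have "q x g * exp (t x g) = q x g * A x g" using True Ap by (simp add: t_def)
    also have "\<dots> = (\<Prod>u\<in>U. cc (N u) g)"
    proof -
      have "dg x ^ m = dg x * dg x ^ (m - 1)" using m1 by (metis Suc_diff_1 less_le_trans power_Suc zero_less_one)
      thus ?thesis using dp DD_pos pr by (simp add: q_def A_def pi_def field_simps)
    qed
    finally show ?thesis using pr by simp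
  next
    case False
    hence q0: "q x g = 0" using q_nonneg[of x g] by linarith
    have "(\<Prod>y\<in>Y. W x (g y)) = 0"
    proof (cases "dg x > 0")
      case True thus ?thesis using q0 DD_pos by (simp add: q_def pi_def)
    next
      case False
      hence "dg x = 0" using dg_nonneg[of x] by linarith
      then obtain y0 where "y0 \<in> Y" "W x (g y0) = 0" using Yne dg_zero by blast
      thus ?thesis using fY by (metis prod_zero_iff)
    qed
    thus ?thesis using q0 by simp
  qed
  have main1: "(\<Sum>f\<in>PiE (insert r (Y \<union> U)) (\<lambda>_. VG). T f) \<ge> exp (\<Sum>x\<in>VG. \<Sum>g\<in>YS. q x g * t x g)"
  proof -
    have "exp (\<Sum>x\<in>VG. \<Sum>g\<in>YS. q x g * t x g) \<le> (\<Sum>x\<in>VG. \<Sum>g\<in>YS. q x g * exp (t x g))"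
      using finV fYS q_nonneg sumq1 by (intro jensen_exp2) auto
    also have "\<dots> = (\<Sum>x\<in>VG. \<Sum>g\<in>YS. (\<Prod>y\<in>Y. W x (g y)) * (\<Prod>u\<in>U. cc (N u) g))"
      using Tq by (intro sum.cong refl) auto
    finally show ?thesis using step1 by simp
  qed
  define Qd where "Qd = (\<Sum>x\<in>VG. \<Sum>g\<in>YS. q x g * ln (dg x))"
  define Qu where "Qu u = (\<Sum>x\<in>VG. \<Sum>g\<in>YS. q x g * ln (cc (N u) g))" for u
  define lp where "lp = ln (DD / nn^2)"
  have lnp: "lp = ln DD - 2 * ln nn" using DD_pos nn_pos by (simp add: lp_def ln_div ln_realpow)
  have pw: "q x g * t x g = q x g * ln DD + real (m - 1) * (q x g * ln (dg x)) + (\<Sum>u\<in>U. q x g * ln (cc (N u) g))"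
    if "x \<in> VG" for x g
  proof (cases "q x g > 0")
    case True
    have dp: "dg x > 0" using qpos[OF True] by auto
    have cp: "\<And>u. u \<in> U \<Longrightarrow> cc (N u) g > 0" using ccpos[OF True that] by (meson less_le_trans zero_less_one)
    have "t x g = ln (A x g)" using True by (simp add: t_def)
    also have "\<dots> = ln DD + ln (dg x ^ (m - 1)) + ln (\<Prod>u\<in>U. cc (N u) g)"
    proof -
      have "(\<Prod>u\<in>U. cc (N u) g) > 0" by (rule prod_pos) (use cp in auto)
      thus ?thesis unfolding A_def using DD_pos dp by (simp add: ln_mult)
    qed
    also have "ln (dg x ^ (m - 1)) = real (m - 1) * ln (dg x)" using dp by (simp add: ln_realpow)
    also have "ln (\<Prod>u\<in>U. cc (N u) g) = (\<Sum>u\<in>U. ln (cc (N u) g))"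
      by (rule ln_prod[OF fU]) (use cp in force)
    finally show ?thesis by (simp add: algebra_simps sum_distrib_left)
  next
    case False
    hence "q x g = 0" using q_nonneg[of x g] by linarith
    thus ?thesis by simp
  qed
  have eq3: "(\<Sum>x\<in>VG. \<Sum>g\<in>YS. q x g * t x g) = ln DD + real (m - 1) * Qd + (\<Sum>u\<in>U. Qu u)"
  proof -
    have "(\<Sum>x\<in>VG. \<Sum>g\<in>YS. q x g * t x g) = (\<Sum>x\<in>VG. \<Sum>g\<in>YS. q x g * ln DD + real (m - 1) * (q x g * ln (dg x)) + (\<Sum>u\<in>U. q x g * ln (cc (N u) g)))"
      using pw by (intro sum.cong refl) auto
    also have "\<dots> = ln DD * (\<Sum>x\<in>VG. \<Sum>g\<in>YS. q x g) + real (m - 1) * Qd + (\<Sum>x\<in>VG. \<Sum>g\<in>YS. \<Sum>u\<in>U. q x g * ln (cc (N u) g))"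
      by (simp add: sum.distrib Qd_def sum_distrib_left sum_distrib_right mult.commute)
    also have "(\<Sum>x\<in>VG. \<Sum>g\<in>YS. \<Sum>u\<in>U. q x g * ln (cc (N u) g)) = (\<Sum>u\<in>U. Qu u)"
    proof -
      have "(\<Sum>x\<in>VG. \<Sum>g\<in>YS. \<Sum>u\<in>U. q x g * ln (cc (N u) g)) = (\<Sum>x\<in>VG. \<Sum>u\<in>U. \<Sum>g\<in>YS. q x g * ln (cc (N u) g))"
        by (intro sum.cong refl sum.swap)
      also have "\<dots> = (\<Sum>u\<in>U. \<Sum>x\<in>VG. \<Sum>g\<in>YS. q x g * ln (cc (N u) g))"
        by (rule sum.swap)
      finally show ?thesis by (simp add: Qu_def)
    qed
    finally show ?thesis using sumq1 by simp
  qed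
  have Qd_bound: "Qd \<ge> ln DD - ln nn"
  proof -
    have "Qd = (\<Sum>x\<in>VG. pi x * ln (dg x))"
      unfolding Qd_def by (intro sum.cong refl) (simp add: sum_distrib_right[symmetric] sumq)
    thus ?thesis using I1 by simp
  qed
  have Qu_bound: "Qu u \<ge> ln nn + real (card (N u)) * lp" if uU: "u \<in> U" for u
  proof (cases "N u = {}")
    case True
    have "cc (N u) g = nn" for g using True by (simp add: cc_def nn_def)
    hence "Qu u = ln nn * (\<Sum>x\<in>VG. \<Sum>g\<in>YS. q x g)" by (simp add: Qu_def sum_distrib_left mult.commute)
    thus ?thesis using sumq1 True by simp
  next
    case False
    define S where "S = N u"
    have SY: "S \<subseteq> Y" using NY[OF uU] by (simp add: S_def)
    have fS: "finite S" using fN[OF uU] by (simp add: S_def)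
    have "Qu u = (\<Sum>x\<in>VG. pi x / dg x ^ card S * (\<Sum>y\<in>PiE S (\<lambda>_. VG). (\<Prod>b\<in>S. W x (y b)) * ln (cc S y)))"
      unfolding Qu_def S_def[symmetric]
    proof (intro sum.cong refl)
      fix x assume xV: "x \<in> VG"
      show "(\<Sum>g\<in>YS. q x g * ln (cc S g)) = pi x / dg x ^ card S * (\<Sum>y\<in>PiE S (\<lambda>_. VG). (\<Prod>b\<in>S. W x (y b)) * ln (cc S y))"
      proof (cases "dg x > 0")
        case True
        have ccr: "cc S g = cc S (restrict g S)" for g unfolding cc_def by (intro sum.cong prod.cong refl) auto
        have "(\<Sum>g\<in>YS. q x g * ln (cc S g)) = pi x / dg x ^ m * (\<Sum>g\<in>YS. (\<Prod>y\<in>Y. W x (g y)) * ln (cc S (restrict g S)))"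
          by (simp add: q_def sum_distrib_left mult.assoc ccr[symmetric])
        also have "\<dots> = pi x / dg x ^ m * (dg x ^ card (Y - S) * (\<Sum>y\<in>PiE S (\<lambda>_. VG). (\<Prod>b\<in>S. W x (y b)) * ln (cc S y)))"
          unfolding YS_def using sum_PiE_marginal[OF fY SY finV, of "W x" "\<lambda>y. ln (cc S y)"] by (simp add: dg_def)
        also have "\<dots> = pi x / dg x ^ card S * (\<Sum>y\<in>PiE S (\<lambda>_. VG). (\<Prod>b\<in>S. W x (y b)) * ln (cc S y))"
        proof -
          have "m = card S + card (Y - S)" using fY SY by (simp add: m_def card_Diff_subset[OF fS SY] card_mono)
          hence "dg x ^ m = dg x ^ card S * dg x ^ card (Y - S)" by (simp add: power_add)
          thus ?thesis using True by (simp add: field_simps)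
        qed
        finally show ?thesis .
      next
        case False thus ?thesis by (simp add: q_def pi_zero)
      qed
    qed
    also have "\<dots> \<ge> ln nn + real (card S) * ln (DD / nn^2)" using PU[OF fS] False by (simp add: S_def)
    finally show ?thesis by (simp add: S_def lp_def)
  qed
  define target where "target = real (1 + m + card U) * ln nn + real (m + (\<Sum>u\<in>U. card (N u))) * lp"
  have "target \<le> ln DD + real (m - 1) * Qd + (\<Sum>u\<in>U. Qu u)"
  proof -
    have "(\<Sum>u\<in>U. ln nn + real (card (N u)) * lp) \<le> (\<Sum>u\<in>U. Qu u)" by (intro sum_mono Qu_bound)
    moreover have "(\<Sum>u\<in>U. ln nn + real (card (N u)) * lp) = real (card U) * ln nn + real (\<Sum>u\<in>U. card (N u)) * lp"
      by (simp add: sum.distrib sum_distrib_right)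
    moreover have "real (m - 1) * Qd \<ge> real (m - 1) * (ln DD - ln nn)" using Qd_bound by (intro mult_left_mono) auto
    moreover have "real (m - 1) = real m - 1" using m1 by simp
    ultimately show ?thesis unfolding target_def lnp by (simp add: algebra_simps)
  qed
  hence "exp target \<le> exp (\<Sum>x\<in>VG. \<Sum>g\<in>YS. q x g * t x g)" using eq3 by simp
  also have "exp target = nn ^ (1 + card Y + card U) * (DD / nn^2) ^ (card Y + (\<Sum>u\<in>U. card (N u)))"
  proof -
    have p: "DD / nn^2 > 0" using DD_pos nn_pos by simp
    have "ln (nn ^ (1 + card Y + card U) * (DD / nn^2) ^ (card Y + (\<Sum>u\<in>U. card (N u)))) = target"
      using nn_pos p DD_pos by (simp add: ln_mult ln_realpow target_def lp_def m_def algebra_simps)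
    moreover have "nn ^ (1 + card Y + card U) * (DD / nn^2) ^ (card Y + (\<Sum>u\<in>U. card (N u))) > 0"
      using nn_pos p by simp
    ultimately show ?thesis by (metis exp_ln)
  qed
  finally show ?thesis using main1 unfolding T_def by simp
qed

end

definition ishom :: "'a set set \<Rightarrow> 'b set set \<Rightarrow> ('a \<Rightarrow> 'b) \<Rightarrow> bool" where
  "ishom E EG f \<longleftrightarrow> (\<forall>u v. {u, v} \<in> E \<longrightarrow> {f u, f v} \<in> EG)"

lemma hom_count_ishom: "hom_count V E VG EG = card {f \<in> V \<rightarrow>\<^sub>E VG. ishom E EG f}"
  by (simp add: hom_count_def ishom_def)

lemma ishom_cong:
  assumes "\<forall>e\<in>E. e \<subseteq> A" "\<forall>i\<in>A. f i = g i"
  shows "ishom E EG f = ishom E EG g"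
proof -
  have eq: "{f u, f v} = {g u, g v}" if "{u,v} \<in> E" for u v
  proof -
    have "u \<in> A" "v \<in> A" using assms(1) that by auto
    thus ?thesis using assms(2) by simp
  qed
  show ?thesis unfolding ishom_def
  proof (intro iffI allI impI)
    fix u v assume "\<forall>u v. {u, v} \<in> E \<longrightarrow> {f u, f v} \<in> EG" "{u, v} \<in> E"
    thus "{g u, g v} \<in> EG" using eq by metis
  next
    fix u v assume "\<forall>u v. {u, v} \<in> E \<longrightarrow> {g u, g v} \<in> EG" "{u, v} \<in> E"
    thus "{f u, f v} \<in> EG" using eq by metis
  qed
qed

lemma hom_Un:
  assumes d: "V1 \<inter> V2 = {}" and f1: "finite V1" and f2: "finite V2"
    and e1: "\<forall>e\<in>E1. e \<subseteq> V1" and e2: "\<forall>e\<in>E2. e \<subseteq> V2"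
  shows "hom_count (V1 \<union> V2) (E1 \<union> E2) VG EG = hom_count V1 E1 VG EG * hom_count V2 E2 VG EG"
proof -
  define A where "A = {f \<in> (V1 \<union> V2) \<rightarrow>\<^sub>E VG. ishom (E1 \<union> E2) EG f}"
  define B1 where "B1 = {f \<in> V1 \<rightarrow>\<^sub>E VG. ishom E1 EG f}"
  define B2 where "B2 = {f \<in> V2 \<rightarrow>\<^sub>E VG. ishom E2 EG f}"
  have ishU: "ishom (E1 \<union> E2) EG f \<longleftrightarrow> ishom E1 EG f \<and> ishom E2 EG f" for f
    unfolding ishom_def by auto
  have "bij_betw (\<lambda>f. (restrict f V1, restrict f V2)) A (B1 \<times> B2)"
  proof (rule bij_betw_byWitness[where f'="\<lambda>(g,h) i. if i \<in> V1 then g i else h i"])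
    show "\<forall>a\<in>A. (case (restrict a V1, restrict a V2) of (g, h) \<Rightarrow> \<lambda>i. if i \<in> V1 then g i else h i) = a"
      unfolding A_def by (auto simp: PiE_def extensional_def fun_eq_iff)
    show "\<forall>a'\<in>B1 \<times> B2. (restrict (case a' of (g, h) \<Rightarrow> \<lambda>i. if i \<in> V1 then g i else h i) V1,
              restrict (case a' of (g, h) \<Rightarrow> \<lambda>i. if i \<in> V1 then g i else h i) V2) = a'"
      unfolding B1_def B2_def using d by (auto simp: PiE_def extensional_def fun_eq_iff)
    show "(\<lambda>f. (restrict f V1, restrict f V2)) ` A \<subseteq> B1 \<times> B2"
    proof
      fix p assume "p \<in> (\<lambda>f. (restrict f V1, restrict f V2)) ` A"
      then obtain f where f: "f \<in> A" "p = (restrict f V1, restrict f V2)" by blast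
      have "ishom E1 EG (restrict f V1) = ishom E1 EG f" by (rule ishom_cong[OF e1]) auto
      moreover have "ishom E2 EG (restrict f V2) = ishom E2 EG f" by (rule ishom_cong[OF e2]) auto
      ultimately show "p \<in> B1 \<times> B2" using f unfolding A_def B1_def B2_def by (auto simp: ishU)
    qed
    show "(\<lambda>(g, h) i. if i \<in> V1 then g i else h i) ` (B1 \<times> B2) \<subseteq> A"
    proof
      fix f assume "f \<in> (\<lambda>(g, h) i. if i \<in> V1 then g i else h i) ` (B1 \<times> B2)"
      then obtain p where p: "p \<in> B1 \<times> B2" "f = (\<lambda>(g, h) i. if i \<in> V1 then g i else h i) p" by blast
      obtain g h where "p = (g, h)" by (cases p)
      hence gh: "g \<in> B1" "h \<in> B2" "f = (\<lambda>i. if i \<in> V1 then g i else h i)" using p by auto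
      have g1: "g \<in> V1 \<rightarrow>\<^sub>E VG" "ishom E1 EG g" using gh(1) unfolding B1_def by auto
      have h1: "h \<in> V2 \<rightarrow>\<^sub>E VG" "ishom E2 EG h" using gh(2) unfolding B2_def by auto
      have "ishom E1 EG f = ishom E1 EG g" by (rule ishom_cong[OF e1]) (simp add: gh)
      moreover have "ishom E2 EG f = ishom E2 EG h"
      proof (rule ishom_cong[OF e2])
        show "\<forall>i\<in>V2. f i = h i" using gh(3) d by auto
      qed
      moreover have "f \<in> (V1 \<union> V2) \<rightarrow>\<^sub>E VG"
      proof -
        have "\<forall>i\<in>V1 \<union> V2. f i \<in> VG" using g1(1) h1(1) gh(3) by (auto simp: PiE_iff)
        moreover have "f \<in> extensional (V1 \<union> V2)"
          using g1(1) h1(1) gh(3) unfolding extensional_def PiE_iff by auto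
        ultimately show ?thesis by (simp add: PiE_iff)
      qed
      ultimately show "f \<in> A" using g1 h1 unfolding A_def by (simp add: ishU)
    qed
  qed
  hence "card A = card (B1 \<times> B2)" by (rule bij_betw_same_card)
  thus ?thesis by (simp add: hom_count_ishom A_def B1_def B2_def card_cartesian_product)
qed

lemma hom_Union:
  assumes "finite CC" "\<forall>C\<in>CC. finite C" "\<forall>C\<in>CC. \<forall>C'\<in>CC. C \<noteq> C' \<longrightarrow> C \<inter> C' = {}"
    "\<forall>C\<in>CC. \<forall>e\<in>Ec C. e \<subseteq> C"
  shows "hom_count (\<Union>CC) (\<Union>C\<in>CC. Ec C) VG EG = (\<Prod>C\<in>CC. hom_count C (Ec C) VG EG)"
  using assms
proof (induction CC rule: finite_induct)
  case empty
  show ?case by (simp add: hom_count_ishom ishom_def)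
next
  case (insert C CC)
  have "hom_count (\<Union>(insert C CC)) (\<Union>C\<in>insert C CC. Ec C) VG EG =
        hom_count (C \<union> \<Union>CC) (Ec C \<union> (\<Union>C\<in>CC. Ec C)) VG EG" by simp
  also have "\<dots> = hom_count C (Ec C) VG EG * hom_count (\<Union>CC) (\<Union>C\<in>CC. Ec C) VG EG"
  proof (rule hom_Un)
    show "C \<inter> \<Union>CC = {}"
    proof (rule ccontr)
      assume "C \<inter> \<Union>CC \<noteq> {}"
      then obtain x C' where "x \<in> C" "C' \<in> CC" "x \<in> C'" by blast
      moreover have "C \<noteq> C'" using \<open>C' \<in> CC\<close> insert.hyps(2) by blast
      ultimately show False using insert.prems(2) by blast
    qed
    show "finite C" using insert.prems(1) by simp
    show "finite (\<Union>CC)" using insert.prems(1) insert.hyps(1) by simp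
    show "\<forall>e\<in>Ec C. e \<subseteq> C" using insert.prems(3) by simp
    show "\<forall>e\<in>\<Union>C\<in>CC. Ec C. e \<subseteq> \<Union>CC" using insert.prems(3) by blast
  qed
  also have "hom_count (\<Union>CC) (\<Union>C\<in>CC. Ec C) VG EG = (\<Prod>C\<in>CC. hom_count C (Ec C) VG EG)"
    using insert.prems by (intro insert.IH) auto
  finally show ?case using insert.hyps by simp
qed


lemma prod_01:
  fixes g :: "'x \<Rightarrow> real"
  assumes "finite S" "\<And>s. s \<in> S \<Longrightarrow> g s = 0 \<or> g s = 1"
  shows "(\<Prod>s\<in>S. g s) = (if \<forall>s\<in>S. g s = 1 then 1 else 0)"
  using assms by (induction S rule: finite_induct) auto

lemma card_filter_sum:
  assumes "finite A"
  shows "real (card {x\<in>A. P x}) = (\<Sum>x\<in>A. if P x then 1 else 0)"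
proof -
  have "real (card {x\<in>A. P x}) = (\<Sum>x\<in>{x\<in>A. P x}. 1)" by simp
  also have "\<dots> = (\<Sum>x\<in>A. if P x then 1 else 0)" by (rule sum.inter_filter[OF assms])
  finally show ?thesis .
qed

context gr begin

lemma W_eq1: "W x y = 1 \<longleftrightarrow> {x,y} \<in> EG" by (simp add: W_def)

lemma p_le1: "DD / nn^2 \<le> 1"
proof -
  have "DD \<le> (\<Sum>x\<in>VG. \<Sum>y\<in>VG. (1::real))"
    unfolding DD_def dg_def by (intro sum_mono) (auto simp: W_def)
  also have "\<dots> = nn^2" by (simp add: nn_def power2_eq_square)
  finally show ?thesis using nn_pos by simp
qed

lemma p_nonneg: "DD / nn^2 \<ge> 0" using DD_pos nn_pos by simp

lemma hom_T:
  fixes r :: 'a and Y U :: "'a set" and N :: "'a \<Rightarrow> 'a set"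
  assumes fY: "finite Y" and fU: "finite U" and rY: "r \<notin> Y" and rU: "r \<notin> U"
    and YU: "Y \<inter> U = {}" and NY: "\<And>u. u\<in>U \<Longrightarrow> N u \<subseteq> Y"
  shows "real (hom_count (insert r (Y \<union> U)) ((\<lambda>y. {r,y}) ` Y \<union> (\<Union>u\<in>U. (\<lambda>b. {u,b}) ` N u)) VG EG) =
    (\<Sum>f\<in>PiE (insert r (Y \<union> U)) (\<lambda>_. VG). (\<Prod>y\<in>Y. W (f r) (f y)) * (\<Prod>u\<in>U. \<Prod>b\<in>N u. W (f u) (f b)))"
proof -
  define E' where "E' = (\<lambda>y. {r,y}) ` Y \<union> (\<Union>u\<in>U. (\<lambda>b. {u,b}) ` N u)"
  have fN: "finite (N u)" if "u \<in> U" for u using NY[OF that] fY finite_subset by blast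
  have fin: "finite (PiE (insert r (Y \<union> U)) (\<lambda>_. VG))" using fY fU finV by (simp add: finite_PiE)
  have ish: "ishom E' EG f \<longleftrightarrow> (\<forall>y\<in>Y. {f r, f y} \<in> EG) \<and> (\<forall>u\<in>U. \<forall>b\<in>N u. {f u, f b} \<in> EG)" for f
  proof
    assume h: "ishom E' EG f"
    show "(\<forall>y\<in>Y. {f r, f y} \<in> EG) \<and> (\<forall>u\<in>U. \<forall>b\<in>N u. {f u, f b} \<in> EG)"
    proof (intro conjI ballI)
      fix y assume "y \<in> Y" hence "{r,y} \<in> E'" by (simp add: E'_def)
      thus "{f r, f y} \<in> EG" using h by (simp add: ishom_def)
    next
      fix u b assume "u \<in> U" "b \<in> N u" hence "{u,b} \<in> E'" by (auto simp: E'_def)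
      thus "{f u, f b} \<in> EG" using h by (simp add: ishom_def)
    qed
  next
    assume h: "(\<forall>y\<in>Y. {f r, f y} \<in> EG) \<and> (\<forall>u\<in>U. \<forall>b\<in>N u. {f u, f b} \<in> EG)"
    show "ishom E' EG f" unfolding ishom_def
    proof (intro allI impI)
      fix a c assume "{a,c} \<in> E'"
      then consider (A) y where "y \<in> Y" "{a,c} = {r,y}" | (B) u b where "u \<in> U" "b \<in> N u" "{a,c} = {u,b}"
        unfolding E'_def by blast
      thus "{f a, f c} \<in> EG"
      proof cases
        case A
        hence "(a = r \<and> c = y) \<or> (a = y \<and> c = r)" by (simp add: doubleton_eq_iff)
        thus ?thesis using h A(1) by (auto simp: insert_commute)
      next
        case B
        hence "(a = u \<and> c = b) \<or> (a = b \<and> c = u)" by (simp add: doubleton_eq_iff)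
        thus ?thesis using h B(1,2) by (auto simp: insert_commute)
      qed
    qed
  qed
  have T01: "(\<Prod>y\<in>Y. W (f r) (f y)) * (\<Prod>u\<in>U. \<Prod>b\<in>N u. W (f u) (f b)) =
      (if ishom E' EG f then 1 else 0)" for f
  proof -
    have i: "(\<Prod>b\<in>N u. W (f u) (f b)) = (if \<forall>b\<in>N u. W (f u) (f b) = 1 then 1 else 0)" if "u \<in> U" for u
      using fN[OF that] W_01 by (intro prod_01) auto
    have "(\<Prod>u\<in>U. \<Prod>b\<in>N u. W (f u) (f b)) = (\<Prod>u\<in>U. (if \<forall>b\<in>N u. W (f u) (f b) = 1 then 1 else 0))"
      using i by (intro prod.cong) auto
    also have "\<dots> = (if \<forall>u\<in>U. \<forall>b\<in>N u. W (f u) (f b) = 1 then 1 else 0)"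
      using fU by (subst prod_01) auto
    finally have a: "(\<Prod>u\<in>U. \<Prod>b\<in>N u. W (f u) (f b)) = (if \<forall>u\<in>U. \<forall>b\<in>N u. W (f u) (f b) = 1 then 1 else 0)" .
    have b: "(\<Prod>y\<in>Y. W (f r) (f y)) = (if \<forall>y\<in>Y. W (f r) (f y) = 1 then 1 else 0)"
      using fY W_01 by (intro prod_01) auto
    show ?thesis unfolding a b ish by (simp add: W_eq1)
  qed
  have "real (hom_count (insert r (Y \<union> U)) E' VG EG) = (\<Sum>f\<in>PiE (insert r (Y \<union> U)) (\<lambda>_. VG). if ishom E' EG f then 1 else 0)"
    unfolding hom_count_ishom by (rule card_filter_sum[OF fin])
  also have "\<dots> = (\<Sum>f\<in>PiE (insert r (Y \<union> U)) (\<lambda>_. VG). (\<Prod>y\<in>Y. W (f r) (f y)) * (\<Prod>u\<in>U. \<Prod>b\<in>N u. W (f u) (f b)))"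
    using T01 by simp
  finally show ?thesis by (simp add: E'_def)
qed

end

context gr begin

lemma SR:
  assumes fC: "finite C" and bip: "bipartition C EC X Y" and rX: "r \<in> X" and ne: "EC \<noteq> {}"
  shows "real (hom_count C EC VG EG) \<ge> nn ^ card C * (DD / nn^2) ^ (card EC + card {u \<in> Y. {r, u} \<notin> EC})"
proof -
  have XY: "X \<inter> Y = {}" and XYC: "X \<union> Y = C" and edges: "\<forall>e\<in>EC. \<exists>a\<in>X. \<exists>b\<in>Y. e = {a,b}"
    using bip by (auto simp: bipartition_def)
  define U where "U = X - {r}"
  define N where "N u = {b \<in> Y. {u,b} \<in> EC}" for u
  define E' where "E' = (\<lambda>y. {r,y}) ` Y \<union> (\<Union>u\<in>U. (\<lambda>b. {u,b}) ` N u)"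
  define M where "M = {u \<in> Y. {r, u} \<notin> EC}"
  have fX: "finite X" and fY: "finite Y" using fC XYC by auto
  have fU: "finite U" using fX by (simp add: U_def)
  have rY: "r \<notin> Y" using rX XY by auto
  have rU: "r \<notin> U" by (simp add: U_def)
  have YU: "Y \<inter> U = {}" using XY by (auto simp: U_def)
  have NY: "N u \<subseteq> Y" for u by (auto simp: N_def)
  have fN: "finite (N u)" for u using NY fY finite_subset by blast
  have Yne: "Y \<noteq> {}" using ne edges by blast
  have Ceq: "C = insert r (Y \<union> U)" using XYC rX by (auto simp: U_def)
  have ECsub: "EC \<subseteq> E'"
  proof
    fix e assume "e \<in> EC"
    then obtain a b where ab: "a \<in> X" "b \<in> Y" "e = {a,b}" using edges by blast
    show "e \<in> E'"
    proof (cases "a = r")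
      case True
      have "{r,b} \<in> (\<lambda>y. {r,y}) ` Y" using ab(2) by (rule imageI)
      thus ?thesis unfolding E'_def ab(3) True by (rule UnI1)
    next
      case False
      hence aU: "a \<in> U" and bN: "b \<in> N a" using ab \<open>e \<in> EC\<close> by (auto simp: U_def N_def)
      have "{a,b} \<in> (\<lambda>b. {a,b}) ` N a" using bN by (rule imageI)
      hence "{a,b} \<in> (\<Union>u\<in>U. (\<lambda>b. {u,b}) ` N u)" by (rule UN_I[OF aU])
      thus ?thesis unfolding E'_def ab(3) by (rule UnI2)
    qed
  qed
  have finEC: "finite EC"
  proof -
    have "EC \<subseteq> Pow C"
    proof
      fix e assume "e \<in> EC"
      then obtain a b where "a \<in> X" "b \<in> Y" "e = {a,b}" using edges by blast
      thus "e \<in> Pow C" using XYC by auto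
    qed
    thus ?thesis using fC finite_subset by blast
  qed
  have mono: "hom_count C E' VG EG \<le> hom_count C EC VG EG"
    unfolding hom_count_ishom
  proof (rule card_mono)
    show "finite {f \<in> C \<rightarrow>\<^sub>E VG. ishom EC EG f}" using fC finV by (simp add: finite_PiE)
    show "{f \<in> C \<rightarrow>\<^sub>E VG. ishom E' EG f} \<subseteq> {f \<in> C \<rightarrow>\<^sub>E VG. ishom EC EG f}"
      using ECsub unfolding ishom_def by auto
  qed
  have cardE': "card E' = card Y + (\<Sum>u\<in>U. card (N u))"
  proof -
    have c1: "card ((\<lambda>y. {r,y}) ` Y) = card Y"
      by (rule card_image) (use rY in \<open>auto simp: inj_on_def doubleton_eq_iff\<close>)
    have c2: "card ((\<lambda>b. {u,b}) ` N u) = card (N u)" if "u \<in> U" for u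
    proof -
      have "u \<notin> Y" using that YU by auto
      hence "inj_on (\<lambda>b. {u,b}) (N u)" using NY by (auto simp: inj_on_def doubleton_eq_iff)
      thus ?thesis by (rule card_image)
    qed
    have c3: "card (\<Union>u\<in>U. (\<lambda>b. {u,b}) ` N u) = (\<Sum>u\<in>U. card ((\<lambda>b. {u,b}) ` N u))"
    proof (rule card_UN_disjoint[OF fU])
      show "\<forall>u\<in>U. finite ((\<lambda>b. {u,b}) ` N u)" using fN by simp
      show "\<forall>u\<in>U. \<forall>u'\<in>U. u \<noteq> u' \<longrightarrow> (\<lambda>b. {u,b}) ` N u \<inter> (\<lambda>b. {u',b}) ` N u' = {}"
        using YU NY by (fastforce simp: doubleton_eq_iff)
    qed
    have c4: "(\<lambda>y. {r,y}) ` Y \<inter> (\<Union>u\<in>U. (\<lambda>b. {u,b}) ` N u) = {}"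
      using YU NY rY rU by (fastforce simp: doubleton_eq_iff)
    have "card E' = card ((\<lambda>y. {r,y}) ` Y) + card (\<Union>u\<in>U. (\<lambda>b. {u,b}) ` N u)"
      unfolding E'_def by (rule card_Un_disjoint) (use fY fU fN c4 in auto)
    thus ?thesis using c1 c2 c3 by simp
  qed
  have expo: "card Y + (\<Sum>u\<in>U. card (N u)) \<le> card EC + card M"
  proof -
    have "E' \<subseteq> EC \<union> (\<lambda>y. {r,y}) ` M"
    proof
      fix e assume "e \<in> E'"
      then consider (A) y where "y \<in> Y" "e = {r,y}" | (B) u b where "u \<in> U" "b \<in> N u" "e = {u,b}"
        unfolding E'_def by auto
      thus "e \<in> EC \<union> (\<lambda>y. {r,y}) ` M"
      proof cases
        case A thus ?thesis by (cases "{r,y} \<in> EC") (auto simp: M_def)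
      next
        case B thus ?thesis by (simp add: N_def)
      qed
    qed
    hence "card E' \<le> card (EC \<union> (\<lambda>y. {r,y}) ` M)"
      by (rule card_mono[rotated]) (use finEC fY in \<open>auto simp: M_def\<close>)
    also have "\<dots> \<le> card EC + card ((\<lambda>y. {r,y}) ` M)" by (rule card_Un_le)
    also have "card ((\<lambda>y. {r,y}) ` M) \<le> card M" by (rule card_image_le) (use fY in \<open>simp add: M_def\<close>)
    finally show ?thesis using cardE' by simp
  qed
  have cardC: "card C = 1 + card Y + card U"
    unfolding Ceq using fY fU rY rU YU by (simp add: card_Un_disjoint)
  have "nn ^ card C * (DD / nn^2) ^ (card EC + card M) \<le> nn ^ card C * (DD / nn^2) ^ (card Y + (\<Sum>u\<in>U. card (N u)))"
    using expo p_le1 p_nonneg nn_pos by (intro mult_left_mono power_decreasing) auto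
  also have "\<dots> \<le> (\<Sum>f\<in>PiE (insert r (Y \<union> U)) (\<lambda>_. VG). (\<Prod>y\<in>Y. W (f r) (f y)) * (\<Prod>u\<in>U. \<Prod>b\<in>N u. W (f u) (f b)))"
    unfolding cardC using core[OF fY fU Yne rY rU YU NY] by simp
  also have "\<dots> = real (hom_count C E' VG EG)"
    unfolding Ceq E'_def using hom_T[OF fY fU rY rU YU NY] by simp
  also have "\<dots> \<le> real (hom_count C EC VG EG)" using mono by simp
  finally show ?thesis by (simp add: M_def)
qed

end

lemma bipartition_sym: "bipartition V E V1 V2 \<Longrightarrow> bipartition V E V2 V1"
  unfolding bipartition_def by (auto simp: insert_commute) (metis insert_commute)

lemma hom_count_le: "finite V \<Longrightarrow> finite VG \<Longrightarrow> hom_count V E VG EG \<le> card VG ^ card V"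
proof -
  assume a: "finite V" "finite VG"
  have "card {f \<in> V \<rightarrow>\<^sub>E VG. \<forall>u v. {u, v} \<in> E \<longrightarrow> {f u, f v} \<in> EG} \<le> card (V \<rightarrow>\<^sub>E VG)"
    by (rule card_mono) (use a in \<open>auto simp: finite_PiE\<close>)
  thus ?thesis using a by (simp add: hom_count_def card_PiE)
qed

lemma hom_count_empty: "finite V \<Longrightarrow> hom_count V {} VG EG = card VG ^ card V"
  unfolding hom_count_def by (simp add: card_PiE)

context gr begin

lemma comp_bound:
  assumes fC: "finite C" and bip: "bipartition C EC X Y"
  shows "real (hom_count C EC VG EG) \<ge> nn ^ card C * (DD / nn^2) ^ (card EC + conn_width C EC)"
proof (cases "EC = {}")
  case True
  have "nn ^ card C * (DD / nn^2) ^ (card EC + conn_width C EC) \<le> nn ^ card C * 1"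
    using p_le1 p_nonneg nn_pos by (intro mult_left_mono power_le_one) auto
  also have "\<dots> = real (hom_count C EC VG EG)" using True fC by (simp add: hom_count_empty nn_def)
  finally show ?thesis .
next
  case False
  define pr where "pr = (SOME p. bipartition C EC (fst p) (snd p))"
  have bp: "bipartition C EC (fst pr) (snd pr)"
    unfolding pr_def by (rule someI[where x="(X,Y)"]) (simp add: bip)
  define V1 where "V1 = fst pr"
  define V2 where "V2 = snd pr"
  have bp': "bipartition C EC V1 V2" using bp by (simp add: V1_def V2_def)
  define MS where "MS = (\<lambda>v. card {u \<in> V2. {v, u} \<notin> EC}) ` V1 \<union> (\<lambda>v. card {u \<in> V1. {v, u} \<notin> EC}) ` V2"
  have cw: "conn_width C EC = Min MS"
    unfolding conn_width_def MS_def V1_def V2_def pr_def by (simp add: Let_def)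
  have fV: "finite V1" "finite V2" using bp' fC by (auto simp: bipartition_def)
  have "V1 \<noteq> {}" using bp' False by (auto simp: bipartition_def)
  hence MSne: "MS \<noteq> {}" by (simp add: MS_def)
  have "Min MS \<in> MS" using MSne fV by (intro Min_in) (auto simp: MS_def)
  then consider (A) r where "r \<in> V1" "Min MS = card {u \<in> V2. {r, u} \<notin> EC}"
    | (B) r where "r \<in> V2" "Min MS = card {u \<in> V1. {r, u} \<notin> EC}"
    unfolding MS_def by blast
  thus ?thesis
  proof cases
    case A thus ?thesis using SR[OF fC bp' A(1) False] cw by simp
  next
    case B thus ?thesis using SR[OF fC bipartition_sym[OF bp'] B(1) False] cw by simp
  qed
qed

lemma K2_density: "hom_density K2_V K2_E VG EG = DD / nn^2"
proof -
  have cond: "(\<forall>u v. {u, v} \<in> {{0::nat, 1}} \<longrightarrow> {f u, f v} \<in> EG) \<longleftrightarrow> {f 0, f 1} \<in> EG" for f :: "nat \<Rightarrow> 'b"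
  proof
    assume "\<forall>u v. {u, v} \<in> {{0::nat, 1}} \<longrightarrow> {f u, f v} \<in> EG"
    thus "{f 0, f 1} \<in> EG" by auto
  next
    assume h: "{f 0, f 1} \<in> EG"
    show "\<forall>u v. {u, v} \<in> {{0::nat, 1}} \<longrightarrow> {f u, f v} \<in> EG"
    proof (intro allI impI)
      fix u v :: nat assume "{u, v} \<in> {{0, 1}}"
      hence "(u = 0 \<and> v = 1) \<or> (u = 1 \<and> v = 0)" by (auto simp: doubleton_eq_iff)
      thus "{f u, f v} \<in> EG" using h by (auto simp: insert_commute)
    qed
  qed
  have fin: "finite (PiE {0::nat,1} (\<lambda>_. VG))" using finV by (simp add: finite_PiE)
  have "real (hom_count K2_V K2_E VG EG) = real (card {f \<in> PiE {0::nat,1} (\<lambda>_. VG). {f 0, f 1} \<in> EG})"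
    unfolding hom_count_def K2_V_def K2_E_def using cond by simp
  also have "\<dots> = (\<Sum>f\<in>PiE {0::nat,1} (\<lambda>_. VG). if {f 0, f 1} \<in> EG then 1 else 0)"
    by (rule card_filter_sum[OF fin])
  also have "\<dots> = (\<Sum>f\<in>PiE {0::nat,1} (\<lambda>_. VG). W (f 0) (f 1))" by (simp add: W_def)
  also have "\<dots> = (\<Sum>p\<in>VG \<times> VG. W (fst p) (snd p))"
  proof (rule sum.reindex_bij_witness[of _ "\<lambda>p k. if k = 0 then fst p else if k = 1 then snd p else undefined"
          "\<lambda>f. (f 0, f 1)"])
    fix f assume f: "f \<in> PiE {0::nat,1} (\<lambda>_. VG)"
    show "(\<lambda>k. if k = 0 then fst (f 0, f 1) else if k = 1 then snd (f 0, f 1) else undefined) = f"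
      using f by (auto simp: PiE_def extensional_def fun_eq_iff)
    show "(f 0, f 1) \<in> VG \<times> VG" using f by auto
    show "W (fst (f 0, f 1)) (snd (f 0, f 1)) = W (f 0) (f 1)" by simp
  next
    fix p assume p: "p \<in> VG \<times> VG"
    show "((\<lambda>k::nat. if k = 0 then fst p else if k = 1 then snd p else undefined) 0,
           (\<lambda>k::nat. if k = 0 then fst p else if k = 1 then snd p else undefined) 1) = p" by simp
    show "(\<lambda>k::nat. if k = 0 then fst p else if k = 1 then snd p else undefined) \<in> PiE {0::nat,1} (\<lambda>_. VG)"
      using p by (auto simp: PiE_def extensional_def)
  qed
  also have "\<dots> = (\<Sum>x\<in>VG. \<Sum>y\<in>VG. W x y)" by (simp add: sum.cartesian_product case_prod_beta)
  also have "\<dots> = DD" by (simp add: DD_def dg_def)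
  finally show ?thesis by (simp add: hom_density_def K2_V_def nn_def power2_eq_square)
qed

end

lemma comp_facts:
  assumes gH: "graph V E"
  shows "finite (components V E)"
    and "\<forall>C\<in>components V E. C \<subseteq> V"
    and "\<forall>C\<in>components V E. \<forall>C'\<in>components V E. C \<noteq> C' \<longrightarrow> C \<inter> C' = {}"
    and "\<Union>(components V E) = V"
    and "(\<Union>C\<in>components V E. {e\<in>E. e \<subseteq> C}) = E"
    and "\<forall>C\<in>components V E. \<forall>C'\<in>components V E. C \<noteq> C' \<longrightarrow> {e\<in>E. e \<subseteq> C} \<inter> {e\<in>E. e \<subseteq> C'} = {}"
proof -
  define R where "R = adj E"
  define comp where "comp v = {u \<in> V. R\<^sup>*\<^sup>* v u}" for v
  have fV: "finite V" using gH by (simp add: graph_def)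
  have CC: "components V E = comp ` V" unfolding components_def comp_def R_def by auto
  have sR: "symp R" unfolding R_def adj_def by (auto intro!: sympI simp: insert_commute)
  have sR2: "R\<^sup>*\<^sup>* a b \<Longrightarrow> R\<^sup>*\<^sup>* b a" for a b using symp_rtranclp[OF sR] by (auto dest: sympD)
  have same: "comp v = comp v'" if "x \<in> comp v" "x \<in> comp v'" for v v' x
  proof -
    have "R\<^sup>*\<^sup>* v x" "R\<^sup>*\<^sup>* v' x" using that by (auto simp: comp_def)
    hence "R\<^sup>*\<^sup>* v v'" "R\<^sup>*\<^sup>* v' v" using sR2 by (meson rtranclp_trans)+
    thus ?thesis unfolding comp_def by (auto intro: rtranclp_trans)
  qed
  show "finite (components V E)" unfolding CC using fV by simp
  show "\<forall>C\<in>components V E. C \<subseteq> V" unfolding CC comp_def by auto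
  show "\<forall>C\<in>components V E. \<forall>C'\<in>components V E. C \<noteq> C' \<longrightarrow> C \<inter> C' = {}"
    unfolding CC using same by blast
  show "\<Union>(components V E) = V" unfolding CC comp_def by auto
  show "(\<Union>C\<in>components V E. {e\<in>E. e \<subseteq> C}) = E"
  proof
    show "(\<Union>C\<in>components V E. {e\<in>E. e \<subseteq> C}) \<subseteq> E" by auto
    show "E \<subseteq> (\<Union>C\<in>components V E. {e\<in>E. e \<subseteq> C})"
    proof
      fix e assume eE: "e \<in> E"
      then obtain a b where ab: "a \<in> V" "b \<in> V" "e = {a,b}" using gH unfolding graph_def by blast
      have "R a b" using eE ab by (simp add: R_def adj_def)
      hence "e \<subseteq> comp a" using ab by (auto simp: comp_def)
      moreover have "comp a \<in> components V E" using ab(1) CC by simp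
      ultimately show "e \<in> (\<Union>C\<in>components V E. {e\<in>E. e \<subseteq> C})" using eE by blast
    qed
  qed
  show "\<forall>C\<in>components V E. \<forall>C'\<in>components V E. C \<noteq> C' \<longrightarrow> {e\<in>E. e \<subseteq> C} \<inter> {e\<in>E. e \<subseteq> C'} = {}"
  proof (intro ballI impI)
    fix C C' assume C: "C \<in> components V E" "C' \<in> components V E" "C \<noteq> C'"
    hence d: "C \<inter> C' = {}" unfolding CC using same by blast
    show "{e\<in>E. e \<subseteq> C} \<inter> {e\<in>E. e \<subseteq> C'} = {}"
    proof (rule ccontr)
      assume "{e\<in>E. e \<subseteq> C} \<inter> {e\<in>E. e \<subseteq> C'} \<noteq> {}"
      then obtain e where e: "e \<in> E" "e \<subseteq> C" "e \<subseteq> C'" by blast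
      then obtain a b where "e = {a,b}" using gH unfolding graph_def by blast
      thus False using e d by auto
    qed
  qed
qed

theorem corollary1p5:
  fixes VH :: "'a set" and EH :: "'a set set" and VG :: "'b set" and EG :: "'b set set"
  assumes "graph VH EH" and "bipartite VH EH"
    and "graph VG EG" and "VG \<noteq> {}"
  shows "hom_density VH EH VG EG \<ge> hom_density K2_V K2_E VG EG ^ (card EH + width VH EH)"
proof -
  note gH = assms(1) and bH = assms(2) and gG = assms(3) and VGne = assms(4)
  have fH: "finite VH" using gH by (simp add: graph_def)
  have fG: "finite VG" using gG by (simp add: graph_def)
  have nG: "real (card VG) > 0" using fG VGne by (simp add: card_gt_0_iff)
  define p where "p = hom_density K2_V K2_E VG EG"
  have p0: "p \<ge> 0" by (simp add: p_def hom_density_def)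
  have p1: "p \<le> 1"
  proof -
    have "hom_count K2_V K2_E VG EG \<le> card VG ^ card K2_V" using fG by (intro hom_count_le) (auto simp: K2_V_def)
    hence "real (hom_count K2_V K2_E VG EG) \<le> real (card VG) ^ card K2_V" by (metis of_nat_le_iff of_nat_power)
    thus ?thesis using nG by (simp add: p_def hom_density_def)
  qed
  have dens_nonneg: "hom_density VH EH VG EG \<ge> 0" by (simp add: hom_density_def)
  have "p ^ (card EH + width VH EH) \<le> hom_density VH EH VG EG"
  proof (cases "EH = {}")
    case True
    have "hom_density VH EH VG EG = 1" using True fH nG by (simp add: hom_density_def hom_count_empty)
    thus ?thesis using p0 p1 by (simp add: power_le_one)
  next
    case EHne: False
    have finEH: "finite EH"
    proof -
      have "EH \<subseteq> Pow VH"
      proof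
        fix e assume "e \<in> EH"
        then obtain a b where "a \<in> VH" "b \<in> VH" "e = {a,b}" using gH unfolding graph_def by blast
        thus "e \<in> Pow VH" by auto
      qed
      thus ?thesis using fH finite_subset by blast
    qed
    have mpos: "card EH + width VH EH > 0" using EHne finEH by (simp add: card_gt_0_iff)
    show ?thesis
    proof (cases "EG = {}")
      case True
      have emp: "{f \<in> {0::nat,1} \<rightarrow>\<^sub>E VG. \<forall>u v. {u, v} \<in> {{0::nat,1}} \<longrightarrow> {f u, f v} \<in> EG} = {}"
      proof (rule equals0I)
        fix f assume "f \<in> {f \<in> {0::nat,1} \<rightarrow>\<^sub>E VG. \<forall>u v. {u, v} \<in> {{0::nat,1}} \<longrightarrow> {f u, f v} \<in> EG}"
        hence "\<forall>u v. {u, v} \<in> {{0::nat,1}} \<longrightarrow> {f u, f v} \<in> EG" by blast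
        hence "{f 0, f 1} \<in> EG" by blast
        thus False using True by simp
      qed
      have "hom_count K2_V K2_E VG EG = 0"
        unfolding hom_count_def K2_V_def K2_E_def emp by simp
      hence "p = 0" by (simp add: p_def hom_density_def)
      hence z: "p ^ (card EH + width VH EH) = 0" using zero_power[OF mpos] by metis
      show ?thesis unfolding z using dens_nonneg .
    next
      case EGne: False
      interpret G: gr VG EG using gG VGne EGne by unfold_locales
      have pD: "p = G.DD / G.nn^2" using G.K2_density by (simp add: p_def)
      define CC where "CC = components VH EH"
      define Ec where "Ec C = {e\<in>EH. e \<subseteq> C}" for C
      note cf = comp_facts[OF gH, folded CC_def]
      have fCC: "finite CC" using cf(1) .
      have CsubV: "\<forall>C\<in>CC. C \<subseteq> VH" using cf(2) .
      have fC: "\<forall>C\<in>CC. finite C" using CsubV fH finite_subset by blast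
      have disj: "\<forall>C\<in>CC. \<forall>C'\<in>CC. C \<noteq> C' \<longrightarrow> C \<inter> C' = {}" using cf(3) .
      have UV: "\<Union>CC = VH" using cf(4) .
      have UE: "(\<Union>C\<in>CC. Ec C) = EH" using cf(5) by (simp add: Ec_def)
      have disjE: "\<forall>C\<in>CC. \<forall>C'\<in>CC. C \<noteq> C' \<longrightarrow> Ec C \<inter> Ec C' = {}" using cf(6) by (simp add: Ec_def)
      have EcC: "\<forall>C\<in>CC. \<forall>e\<in>Ec C. e \<subseteq> C" by (simp add: Ec_def)
      obtain V1 V2 where bp: "bipartition VH EH V1 V2" using bH by (auto simp: bipartite_def)
      have bpC: "bipartition C (Ec C) (V1 \<inter> C) (V2 \<inter> C)" if "C \<in> CC" for C
      proof -
        have "V1 \<inter> V2 = {}" "V1 \<union> V2 = VH" and ed: "\<forall>e\<in>EH. \<exists>a\<in>V1. \<exists>b\<in>V2. e = {a, b}"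
          using bp by (auto simp: bipartition_def)
        moreover have "C \<subseteq> VH" using CsubV that by blast
        moreover have "\<forall>e\<in>Ec C. \<exists>a\<in>V1 \<inter> C. \<exists>b\<in>V2 \<inter> C. e = {a, b}"
        proof
          fix e assume e: "e \<in> Ec C"
          then obtain a b where "a \<in> V1" "b \<in> V2" "e = {a,b}" using ed by (auto simp: Ec_def)
          moreover have "e \<subseteq> C" using e by (simp add: Ec_def)
          ultimately show "\<exists>a\<in>V1 \<inter> C. \<exists>b\<in>V2 \<inter> C. e = {a, b}" by auto
        qed
        ultimately show ?thesis unfolding bipartition_def by auto
      qed
      have hom: "real (hom_count VH EH VG EG) = (\<Prod>C\<in>CC. real (hom_count C (Ec C) VG EG))"
      proof -
        have "hom_count (\<Union>CC) (\<Union>C\<in>CC. Ec C) VG EG = (\<Prod>C\<in>CC. hom_count C (Ec C) VG EG)"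
          using fCC fC disj EcC by (rule hom_Union)
        thus ?thesis using UV UE by simp
      qed
      have "(\<Prod>C\<in>CC. G.nn ^ card C * p ^ (card (Ec C) + conn_width C (Ec C))) \<le>
            (\<Prod>C\<in>CC. real (hom_count C (Ec C) VG EG))"
      proof (rule prod_mono)
        fix C assume C: "C \<in> CC"
        have "G.nn ^ card C * p ^ (card (Ec C) + conn_width C (Ec C)) \<le> real (hom_count C (Ec C) VG EG)"
          unfolding pD using G.comp_bound[OF _ bpC[OF C]] fC C by simp
        moreover have "0 \<le> G.nn ^ card C * p ^ (card (Ec C) + conn_width C (Ec C))"
          using p0 G.nn_pos by simp
        ultimately show "0 \<le> G.nn ^ card C * p ^ (card (Ec C) + conn_width C (Ec C)) \<and>
            G.nn ^ card C * p ^ (card (Ec C) + conn_width C (Ec C)) \<le> real (hom_count C (Ec C) VG EG)" by simp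
      qed
      also have "(\<Prod>C\<in>CC. G.nn ^ card C * p ^ (card (Ec C) + conn_width C (Ec C))) =
          G.nn ^ (\<Sum>C\<in>CC. card C) * p ^ (\<Sum>C\<in>CC. card (Ec C) + conn_width C (Ec C))"
        by (simp add: prod.distrib power_sum)
      also have "(\<Sum>C\<in>CC. card C) = card VH"
        using card_UN_disjoint[OF fCC, of "\<lambda>C. C"] fC disj UV by simp
      also have "(\<Sum>C\<in>CC. card (Ec C) + conn_width C (Ec C)) = card EH + width VH EH"
      proof -
        have "(\<Sum>C\<in>CC. card (Ec C)) = card EH"
        proof -
          have "\<forall>C\<in>CC. finite (Ec C)" using finEH by (simp add: Ec_def)
          hence "card (\<Union>C\<in>CC. Ec C) = (\<Sum>C\<in>CC. card (Ec C))" using card_UN_disjoint[OF fCC] disjE by blast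
          thus ?thesis using UE by simp
        qed
        moreover have "width VH EH = (\<Sum>C\<in>CC. conn_width C (Ec C))"
          by (simp add: width_def CC_def Ec_def)
        ultimately show ?thesis by (simp add: sum.distrib)
      qed
      finally have "G.nn ^ card VH * p ^ (card EH + width VH EH) \<le> real (hom_count VH EH VG EG)"
        using hom by simp
      thus ?thesis using G.nn_pos by (simp add: hom_density_def G.nn_def pos_le_divide_eq mult.commute)
    qed
  qed
  thus ?thesis by (simp add: p_def)
qed


end
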